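(* Assume the setting and algorithm described in the context, let Assumption A (restricted LP) and Assumption B (step-size) hold, and let the initial allocation vectors satisfy $\sum_{i=1}^N y_i^0 = b-r$. Then there exists a sufficiently large $M>0$ such that the allocation vector sequence $\{(y_1^t,\dots,y_N^t)\}_{t\ge 0}$ generated by the updates (P1)–(P2) satisfies: (i) $\sum_{i=1}^N y_i^t = b - r$ for all $t\ge 0$; (ii) $\lim_{t\to\infty}\|y_i^t - y_i^\star\| = 0$ for all $i\in\{1,\dots,N\}$, where $(y_1^\star,\dots,y_N^\star)$ is an optimal solution of the master problem (MP); (iii) every limit point $(z_1^\infty,\dots,z_N^\infty)$ of the primal sequence $\{(z_1^t,\dots,z_N^t)\}_{t\ge0}$ associated with $\{(y_1^t,\dots,y_N^t)\}_{t\ge 0}$ is an optimal solution of the restricted LP (LP$_r$), and $\sum_{i=1}^N c_i^\top z_i^\infty$ equals the optimal cost of (LP$_r$).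
   Context: Data: $N$ agents; for each $i\in\{1,\dots,N\}$, $c_i\in\mathbb{R}^{n_i}$, $A_i\in\mathbb{R}^{S\times n_i}$, and a nonempty compact mixed-integer polyhedral set $X_i=\{x_i\in\mathbb{Z}^{Z_i}\times\mathbb{R}^{R_i} : D_i x_i\preceq d_i\}$ with $Z_i+R_i=n_i$; $b\in\mathbb{R}^S$. Here $\preceq$ denotes componentwise inequality and $\mathbf 1$ the all-ones vector. $\mathrm{conv}(X_i)$ is the convex hull of $X_i$. A restriction vector $r\in\mathbb{R}^S$, $r\succeq 0$, is given. Restricted LP (LP$_r$): minimize $\sum_i c_i^\top z_i$ subject to $\sum_i A_i z_i\preceq b-r$, $z_i\in\mathrm{conv}(X_i)$ for all $i$. For $y_i\in\mathbb{R}^S$, $p_i(y_i)$ is the optimal value of: minimize $c_i^\top z_i$ subject to $A_i z_i\preceq y_i$, $z_i\in\mathrm{conv}(X_i)$; $Y_i$ is the set of $y_i$ for which this problem is feasible. Master problem (MP): minimize $\sum_i p_i(y_i)$ subject to $\sum_i y_i=b-r$, $y_i\in Y_i$. Assumption A: (LP$_r$) is feasible and its optimal solution is unique. Assumption B: the step-sizes $\alpha^t\ge0$ satisfy $\sum_t\alpha^t=\infty$, $\sum_t(\alpha^t)^2<\infty$. Network: agents communicate over a connected undirected graph with neighbor sets $\mathcal N_i$. Algorithm (with parameter $M>0$): at each $t\ge0$, agent $i$ computes a primal-dual optimal pair $((z_i^t,v_i^t),\mu_i^t)$ of the LP (P1): minimize $c_i^\top z_i + M v_i$ over $z_i\in\mathrm{conv}(X_i)$,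 $v_i\ge 0$, subject to $A_i z_i\preceq y_i^t+v_i\mathbf 1$, where $\mu_i^t\in\mathbb{R}^S$ is the Lagrange multiplier of this last constraint; then (P2): $y_i^{t+1}=y_i^t+\alpha^t\sum_{j\in\mathcal N_i}(\mu_i^t-\mu_j^t)$. *)

theory Defs
  imports "HOL-Analysis.Analysis"
begin

text \<open>Vectors over a common finite coordinate type (agents with fewer variables are
  modelled by padding with coordinates forced to zero by D, d).\<close>
definition mip_set :: "'n set \<Rightarrow> real^'n^'m \<Rightarrow> real^'m \<Rightarrow> (real^'n) set" where
  "mip_set Zc D d = {x. (\<forall>k\<in>Zc. x $ k \<in> \<int>) \<and> D *v x \<le> d}"

definition LPr_feasible ::
  "('i::finite \<Rightarrow> real^'n) \<Rightarrow> ('i \<Rightarrow> real^'n^'s) \<Rightarrow> ('i \<Rightarrow> (real^'n) set)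
   \<Rightarrow> real^'s \<Rightarrow> real^'s \<Rightarrow> ('i \<Rightarrow> real^'n) \<Rightarrow> bool" where
  "LPr_feasible c A X b r z \<longleftrightarrow>
     (\<Sum>i\<in>UNIV. A i *v z i) \<le> b - r \<and> (\<forall>i. z i \<in> convex hull (X i))"

definition LPr_cost :: "('i::finite \<Rightarrow> real^'n) \<Rightarrow> ('i \<Rightarrow> real^'n) \<Rightarrow> real" where
  "LPr_cost c z = (\<Sum>i\<in>UNIV. c i \<bullet> z i)"

definition LPr_optimal ::
  "('i::finite \<Rightarrow> real^'n) \<Rightarrow> ('i \<Rightarrow> real^'n^'s) \<Rightarrow> ('i \<Rightarrow> (real^'n) set)
   \<Rightarrow> real^'s \<Rightarrow> real^'s \<Rightarrow> ('i \<Rightarrow> real^'n) \<Rightarrow> bool" where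
  "LPr_optimal c A X b r z \<longleftrightarrow> LPr_feasible c A X b r z \<and>
     (\<forall>z'. LPr_feasible c A X b r z' \<longrightarrow> LPr_cost c z \<le> LPr_cost c z')"

definition LPr_value ::
  "('i::finite \<Rightarrow> real^'n) \<Rightarrow> ('i \<Rightarrow> real^'n^'s) \<Rightarrow> ('i \<Rightarrow> (real^'n) set)
   \<Rightarrow> real^'s \<Rightarrow> real^'s \<Rightarrow> real" where
  "LPr_value c A X b r = Inf (LPr_cost c ` {z. LPr_feasible c A X b r z})"

definition Ydom :: "real^'n^'s \<Rightarrow> (real^'n) set \<Rightarrow> (real^'s) set" where
  "Ydom Ai Xi = {y. \<exists>z\<in>convex hull Xi. Ai *v z \<le> y}"

definition pval :: "real^'n \<Rightarrow> real^'n^'s \<Rightarrow> (real^'n) set \<Rightarrow> real^'s \<Rightarrow> real" where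
  "pval ci Ai Xi y = Inf ((\<lambda>z. ci \<bullet> z) ` {z\<in>convex hull Xi. Ai *v z \<le> y})"

definition MP_feasible ::
  "('i::finite \<Rightarrow> real^'n^'s) \<Rightarrow> ('i \<Rightarrow> (real^'n) set) \<Rightarrow> real^'s \<Rightarrow> real^'s
   \<Rightarrow> ('i \<Rightarrow> real^'s) \<Rightarrow> bool" where
  "MP_feasible A X b r y \<longleftrightarrow> (\<Sum>i\<in>UNIV. y i) = b - r \<and> (\<forall>i. y i \<in> Ydom (A i) (X i))"

definition MP_optimal ::
  "('i::finite \<Rightarrow> real^'n) \<Rightarrow> ('i \<Rightarrow> real^'n^'s) \<Rightarrow> ('i \<Rightarrow> (real^'n) set)
   \<Rightarrow> real^'s \<Rightarrow> real^'s \<Rightarrow> ('i \<Rightarrow> real^'s) \<Rightarrow> bool" where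
  "MP_optimal c A X b r y \<longleftrightarrow> MP_feasible A X b r y \<and>
     (\<forall>y'. MP_feasible A X b r y' \<longrightarrow>
        (\<Sum>i\<in>UNIV. pval (c i) (A i) (X i) (y i)) \<le> (\<Sum>i\<in>UNIV. pval (c i) (A i) (X i) (y' i)))"

text \<open>Problem (P1) for agent i with allocation y and parameter M:
  minimize c^T z + M v over z in conv X, v >= 0, subject to A z <= y + v 1.
  Lagrangian w.r.t. the last constraint, multiplier mu.\<close>
definition P1_lagr :: "real^'n \<Rightarrow> real^'n^'s \<Rightarrow> real \<Rightarrow> real^'s
    \<Rightarrow> real^'n \<Rightarrow> real \<Rightarrow> real^'s \<Rightarrow> real" where
  "P1_lagr ci Ai M y z v mu = ci \<bullet> z + M * v + mu \<bullet> (Ai *v z - y - vec v)"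

definition P1_primal_dual_opt :: "real^'n \<Rightarrow> real^'n^'s \<Rightarrow> (real^'n) set \<Rightarrow> real \<Rightarrow> real^'s
    \<Rightarrow> real^'n \<Rightarrow> real \<Rightarrow> real^'s \<Rightarrow> bool" where
  "P1_primal_dual_opt ci Ai Xi M y z v mu \<longleftrightarrow>
     z \<in> convex hull Xi \<and> v \<ge> 0 \<and> Ai *v z \<le> y + vec v \<and> mu \<ge> 0 \<and>
     (\<forall>mu'. mu' \<ge> 0 \<longrightarrow> P1_lagr ci Ai M y z v mu' \<le> P1_lagr ci Ai M y z v mu) \<and>
     (\<forall>z' v'. z' \<in> convex hull Xi \<longrightarrow> v' \<ge> 0 \<longrightarrow>
        P1_lagr ci Ai M y z v mu \<le> P1_lagr ci Ai M y z' v' mu)"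

definition connected_undirected :: "('i \<Rightarrow> 'i set) \<Rightarrow> bool" where
  "connected_undirected Nb \<longleftrightarrow>
     (\<forall>i j. j \<in> Nb i \<longleftrightarrow> i \<in> Nb j) \<and> (\<forall>i. i \<notin> Nb i) \<and>
     (\<forall>i j. (i, j) \<in> {(a, b). b \<in> Nb a}\<^sup>*)"

end

theory Submission
  imports Defs
begin

definition lap :: "('i::finite \<Rightarrow> 'i set) \<Rightarrow> ('v::euclidean_space)^'i \<Rightarrow> 'v^'i" where
  "lap Nb w = (\<chi> i. \<Sum>j\<in>Nb i. w$i - w$j)"

lemma lap_nth: "lap Nb w $ i = (\<Sum>j\<in>Nb i. w$i - w$j)"
  by (simp add: lap_def)

lemma linear_lap: "linear (lap Nb)"
  by (rule linearI) (auto simp: lap_def vec_eq_iff sum.distrib[symmetric] scaleR_right_diff_distrib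
         scaleR_sum_right algebra_simps intro!: sum.cong)

lemma sum_swap_nb:
  fixes g :: "'i::finite \<Rightarrow> 'i \<Rightarrow> 'b::comm_monoid_add"
  assumes sym: "\<And>i j. j \<in> Nb i \<longleftrightarrow> i \<in> Nb j"
  shows "(\<Sum>i\<in>UNIV. \<Sum>j\<in>Nb i. g i j) = (\<Sum>i\<in>UNIV. \<Sum>j\<in>Nb i. g j i)"
proof -
  have "(\<Sum>i\<in>UNIV. \<Sum>j\<in>Nb i. g i j) = (\<Sum>i\<in>UNIV. \<Sum>j\<in>{j. j \<in> UNIV \<and> j \<in> Nb i}. g i j)"
    by simp
  also have "\<dots> = (\<Sum>j\<in>UNIV. \<Sum>i\<in>{i. i \<in> UNIV \<and> j \<in> Nb i}. g i j)"
    by (rule sum.swap_restrict) auto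
  also have "\<dots> = (\<Sum>j\<in>UNIV. \<Sum>i\<in>Nb j. g i j)"
    using sym by (intro sum.cong) auto
  finally show ?thesis .
qed

lemma inner_lap:
  fixes u w :: "('v::euclidean_space)^'i::finite"
  assumes sym: "\<And>i j. j \<in> Nb i \<longleftrightarrow> i \<in> Nb j"
  shows "u \<bullet> lap Nb w = (1/2) * (\<Sum>i\<in>UNIV. \<Sum>j\<in>Nb i. (u$i - u$j) \<bullet> (w$i - w$j))"
proof -
  have a: "u \<bullet> lap Nb w = (\<Sum>i\<in>UNIV. \<Sum>j\<in>Nb i. u$i \<bullet> (w$i - w$j))"
    by (simp add: inner_vec_def lap_nth inner_sum_right)
  also have "\<dots> = (\<Sum>i\<in>UNIV. \<Sum>j\<in>Nb i. u$j \<bullet> (w$j - w$i))"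
    by (rule sum_swap_nb[OF sym])
  finally have b: "u \<bullet> lap Nb w = (\<Sum>i\<in>UNIV. \<Sum>j\<in>Nb i. - (u$j \<bullet> (w$i - w$j)))"
    by (simp add: inner_diff_right)
  have "2 * (u \<bullet> lap Nb w) = (\<Sum>i\<in>UNIV. \<Sum>j\<in>Nb i. u$i \<bullet> (w$i - w$j)) + (\<Sum>i\<in>UNIV. \<Sum>j\<in>Nb i. - (u$j \<bullet> (w$i - w$j)))"
    using a b by linarith
  also have "\<dots> = (\<Sum>i\<in>UNIV. \<Sum>j\<in>Nb i. u$i \<bullet> (w$i - w$j) + - (u$j \<bullet> (w$i - w$j)))"
    by (simp only: sum.distrib[symmetric])
  also have "\<dots> = (\<Sum>i\<in>UNIV. \<Sum>j\<in>Nb i. (u$i - u$j) \<bullet> (w$i - w$j))"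
    by (simp add: inner_diff_left)
  finally show ?thesis by simp
qed

lemma lap_symm:
  fixes u w :: "('v::euclidean_space)^'i::finite"
  assumes sym: "\<And>i j. j \<in> Nb i \<longleftrightarrow> i \<in> Nb j"
  shows "u \<bullet> lap Nb w = w \<bullet> lap Nb u"
  unfolding inner_lap[OF sym] by (simp add: inner_commute)

lemma lap_psd:
  fixes w :: "('v::euclidean_space)^'i::finite"
  assumes sym: "\<And>i j. j \<in> Nb i \<longleftrightarrow> i \<in> Nb j"
  shows "w \<bullet> lap Nb w = (1/2) * (\<Sum>i\<in>UNIV. \<Sum>j\<in>Nb i. (norm (w$i - w$j))\<^sup>2)"
  unfolding inner_lap[OF sym] by (simp add: power2_norm_eq_inner)

lemma lap_psd_nonneg:
  fixes w :: "('v::euclidean_space)^'i::finite"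
  assumes sym: "\<And>i j. j \<in> Nb i \<longleftrightarrow> i \<in> Nb j"
  shows "w \<bullet> lap Nb w \<ge> 0"
  unfolding lap_psd[OF sym] by (auto intro!: sum_nonneg)

lemma sum_lap: 
  fixes w :: "('v::euclidean_space)^'i::finite"
  assumes sym: "\<And>i j. j \<in> Nb i \<longleftrightarrow> i \<in> Nb j"
  shows "(\<Sum>i\<in>UNIV. lap Nb w $ i) = 0"
proof -
  have "(\<Sum>i\<in>UNIV. lap Nb w $ i) = (\<Sum>i\<in>UNIV. \<Sum>j\<in>Nb i. w$i - w$j)" by (simp add: lap_nth)
  also have "\<dots> = (\<Sum>i\<in>UNIV. \<Sum>j\<in>Nb i. w$j - w$i)" by (rule sum_swap_nb[OF sym])
  also have "\<dots> = - (\<Sum>i\<in>UNIV. \<Sum>j\<in>Nb i. w$i - w$j)" by (simp add: sum_negf[symmetric])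
  finally have e: "(\<Sum>i\<in>UNIV. lap Nb w $ i) = - (\<Sum>i\<in>UNIV. lap Nb w $ i)"
    by (simp add: lap_nth)
  have "2 *\<^sub>R (\<Sum>i\<in>UNIV. lap Nb w $ i) = 0"
    by (subst scaleR_2, subst (2) e) simp
  thus ?thesis by simp
qed

lemma lap_kernel:
  fixes w :: "('v::euclidean_space)^'i::finite"
  assumes g: "connected_undirected Nb" and L: "lap Nb w = 0"
  shows "w$i = w$j"
proof -
  have sym: "\<And>i j. j \<in> Nb i \<longleftrightarrow> i \<in> Nb j" using g by (auto simp: connected_undirected_def)
  have "w \<bullet> lap Nb w = 0" using L by simp
  hence "(\<Sum>i\<in>UNIV. \<Sum>j\<in>Nb i. (norm (w$i - w$j))\<^sup>2) = 0" using lap_psd[OF sym, of w] by simp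
  hence "\<forall>a\<in>UNIV. (\<Sum>j\<in>Nb a. (norm (w$a - w$j))\<^sup>2) = 0"
    by (subst (asm) sum_nonneg_eq_0_iff) (auto intro: sum_nonneg)
  hence e: "\<And>a b. b \<in> Nb a \<Longrightarrow> w$a = w$b"
    by (auto simp: sum_nonneg_eq_0_iff)
  have "(i, j) \<in> {(a, b). b \<in> Nb a}\<^sup>*" using g by (auto simp: connected_undirected_def)
  thus ?thesis
  proof (induction rule: rtrancl_induct)
    case base then show ?case by simp
  next
    case (step y z) then show ?case using e by auto
  qed
qed


lemma norm_vec_sq: "(norm (x::('v::real_normed_vector)^'i::finite))\<^sup>2 = (\<Sum>i\<in>UNIV. (norm (x$i))\<^sup>2)"
  by (simp add: norm_vec_def L2_set_def sum_nonneg)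

definition cst :: "'v \<Rightarrow> 'v^'i::finite" where "cst c = (\<chi> i. c)"

lemma lap_cst: "lap Nb (cst c) = 0"
  by (simp add: lap_def cst_def vec_eq_iff)

lemma inner_cst: "cst c \<bullet> u = c \<bullet> (\<Sum>i\<in>UNIV. u$i)"
  by (simp add: cst_def inner_vec_def inner_sum_right)

lemma conn_sym: assumes "connected_undirected Nb" shows "j \<in> Nb i \<longleftrightarrow> i \<in> Nb j"
  using assms by (auto simp: connected_undirected_def)

definition Hsp :: "(('v::euclidean_space)^'i::finite) set" where
  "Hsp = {w. (\<Sum>i\<in>UNIV. w$i) = 0}"

lemma subspace_Hsp: "subspace Hsp"
  unfolding subspace_def Hsp_def
  by (auto simp: sum.distrib scaleR_sum_right[symmetric])

definition proj :: "('v::euclidean_space)^'i::finite \<Rightarrow> 'v^'i" where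
  "proj w = w - cst ((1 / real CARD('i)) *\<^sub>R (\<Sum>i\<in>UNIV. w$i))"

lemma proj_Hsp: "proj w \<in> Hsp"
  by (simp add: proj_def Hsp_def cst_def sum_subtractf sum_constant_scaleR)

lemma lap_proj: "lap Nb (proj w) = lap Nb w"
  using linear_diff[OF linear_lap, of Nb w] by (simp add: proj_def linear_diff[OF linear_lap] lap_cst)

lemma lap_inj_Hsp:
  fixes w :: "('v::euclidean_space)^'i::finite"
  assumes g: "connected_undirected Nb" and w: "w \<in> Hsp" and L: "lap Nb w = 0"
  shows "w = 0"
proof -
  have eq: "\<And>i. w$i = w$(undefined)" using lap_kernel[OF g L] by blast
  have "(\<Sum>i\<in>UNIV. w$i) = real CARD('i) *\<^sub>R w$undefined"
    by (subst eq) (simp add: sum_constant_scaleR)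
  hence "w$undefined = 0" using w by (simp add: Hsp_def)
  thus ?thesis using eq by (simp add: vec_eq_iff)
qed

lemma lap_in_Hsp: assumes g: "connected_undirected Nb" shows "lap Nb w \<in> Hsp"
  using sum_lap[OF conn_sym[OF g]] by (simp add: Hsp_def)

lemma lap_onto:
  fixes u :: "('v::euclidean_space)^'i::finite"
  assumes g: "connected_undirected Nb" and u: "u \<in> Hsp"
  shows "\<exists>w. lap Nb w = u"
proof -
  have inj: "inj_on (lap Nb) Hsp"
  proof (rule inj_onI)
    fix x y assume "x \<in> Hsp" "y \<in> Hsp" "lap Nb x = lap Nb y"
    hence "x - y \<in> Hsp" "lap Nb (x - y) = 0"
      using subspace_diff[OF subspace_Hsp] by (auto simp: linear_diff[OF linear_lap])
    thus "x = y" using lap_inj_Hsp[OF g, of "x - y"] by simp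
  qed
  have "dim (lap Nb ` (Hsp :: ('v^'i) set)) = dim (Hsp :: ('v^'i) set)"
    by (rule dim_image_eq[OF linear_lap]) (simp add: span_eq_iff[THEN iffD2, OF subspace_Hsp] inj)
  moreover have "lap Nb ` (Hsp :: ('v^'i) set) \<subseteq> Hsp" using lap_in_Hsp[OF g] by auto
  ultimately have "lap Nb ` (Hsp :: ('v^'i) set) = Hsp"
    by (intro subspace_dim_equal linear_subspace_image[OF linear_lap] subspace_Hsp) auto
  thus ?thesis using u by (metis image_iff)
qed

lemma lap_quad_upper:
  fixes e :: "('v::euclidean_space)^'i::finite"
  assumes g: "connected_undirected Nb"
  shows "\<exists>C>0. \<forall>e::('v^'i). e \<bullet> lap Nb e \<le> C * (norm (lap Nb e))\<^sup>2"
proof -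
  have "\<exists>d>0. \<forall>x\<in>Hsp. norm (lap Nb x) \<ge> d * norm (x::'v^'i)"
    by (rule injective_imp_isometric)
      (auto simp: closed_subspace subspace_Hsp linear_linear linear_lap lap_inj_Hsp[OF g])
  then obtain d where d: "d > 0" "\<And>x. x \<in> Hsp \<Longrightarrow> norm (lap Nb x) \<ge> d * norm (x::'v^'i)" by blast
  have "e \<bullet> lap Nb e \<le> (1/d) * (norm (lap Nb e))\<^sup>2" for e :: "'v^'i"
  proof -
    define p where "p = proj e"
    have "e = p + cst ((1 / real CARD('i)) *\<^sub>R (\<Sum>i\<in>UNIV. e$i))" by (simp add: p_def proj_def)
    hence "e \<bullet> lap Nb e = p \<bullet> lap Nb e"
      by (subst (asm) (1) eq_commute) (metis inner_add_left inner_cst sum_lap[OF conn_sym[OF g]] inner_zero_right add_0_right)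
    also have "\<dots> \<le> norm p * norm (lap Nb e)" by (rule norm_cauchy_schwarz)
    also have "\<dots> \<le> ((1/d) * norm (lap Nb e)) * norm (lap Nb e)"
    proof (rule mult_right_mono)
      have "lap Nb p = lap Nb e" by (simp add: p_def lap_proj)
      hence "d * norm p \<le> norm (lap Nb e)" using d(2)[OF proj_Hsp, of e] by (simp add: p_def)
      thus "norm p \<le> (1/d) * norm (lap Nb e)" using d(1) by (simp add: field_simps)
    qed simp
    finally show ?thesis by (simp add: power2_eq_square)
  qed
  thus ?thesis using d(1) by (intro exI[of _ "1/d"]) auto
qed

lemma lap_norm_upper:
  fixes e :: "('v::euclidean_space)^'i::finite"
  assumes sym: "\<And>i j. j \<in> Nb i \<longleftrightarrow> i \<in> Nb j"
  shows "(norm (lap Nb e))\<^sup>2 \<le> 2 * real CARD('i) * (e \<bullet> lap Nb e)"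
proof -
  have "(norm (lap Nb e))\<^sup>2 = (\<Sum>i\<in>UNIV. (norm (\<Sum>j\<in>Nb i. e$i - e$j))\<^sup>2)"
    by (simp add: norm_vec_sq lap_nth)
  also have "\<dots> \<le> (\<Sum>i\<in>UNIV. real CARD('i) * (\<Sum>j\<in>Nb i. (norm (e$i - e$j))\<^sup>2))"
  proof (rule sum_mono)
    fix i
    have "(norm (\<Sum>j\<in>Nb i. e$i - e$j))\<^sup>2 \<le> (\<Sum>j\<in>Nb i. norm (e$i - e$j))\<^sup>2"
      by (rule power_mono[OF norm_sum]) simp
    also have "\<dots> \<le> (\<Sum>j\<in>Nb i. (norm (e$i - e$j))\<^sup>2) * card (Nb i)"
      by (rule sum_squared_le_sum_of_squares)
    also have "\<dots> \<le> (\<Sum>j\<in>Nb i. (norm (e$i - e$j))\<^sup>2) * real CARD('i)"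
      by (intro mult_left_mono) (auto intro: sum_nonneg card_mono)
    finally show "(norm (\<Sum>j\<in>Nb i. e$i - e$j))\<^sup>2 \<le> real CARD('i) * (\<Sum>j\<in>Nb i. (norm (e$i - e$j))\<^sup>2)"
      by (simp add: mult.commute)
  qed
  also have "\<dots> = 2 * real CARD('i) * (e \<bullet> lap Nb e)"
    by (simp add: lap_psd[OF sym] sum_distrib_left)
  finally show ?thesis .
qed


lemma polyhedron_preimage:
  fixes f :: "'a::euclidean_space \<Rightarrow> 'b::euclidean_space"
  assumes P: "polyhedron T" and f: "linear f"
  shows "polyhedron {x. f x \<in> T}"
proof -
  obtain F where F: "finite F" "T = \<Inter>F" "\<And>h. h \<in> F \<Longrightarrow> \<exists>a b. a \<noteq> 0 \<and> h = {x. a \<bullet> x \<le> b}"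
    using P unfolding polyhedron_def by blast
  have eq: "{x. f x \<in> T} = \<Inter>((\<lambda>h. {x. f x \<in> h}) ` F)" using F(2) by auto
  show ?thesis unfolding eq
  proof (rule polyhedron_Inter)
    show "finite ((\<lambda>h. {x. f x \<in> h}) ` F)" using F(1) by simp
  next
    fix S assume "S \<in> (\<lambda>h. {x. f x \<in> h}) ` F"
    then obtain h where h: "h \<in> F" "S = {x. f x \<in> h}" by blast
    then obtain a b where ab: "h = {x. a \<bullet> x \<le> b}" using F(3) by blast
    have "S = {x. adjoint f a \<bullet> x \<le> b}"
      using h(2) ab adjoint_works[OF f] by (auto simp: inner_commute)
    thus "polyhedron S" by (simp add: polyhedron_halfspace_le)
  qed
qed

lemma polyhedron_le_vec: "polyhedron {u::real^'m::finite. u \<le> d}"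
proof -
  have "{u::real^'m. u \<le> d} = \<Inter>((\<lambda>j. {u. axis j 1 \<bullet> u \<le> d$j}) ` UNIV)"
    by (auto simp: less_eq_vec_def inner_axis')
  thus ?thesis by (auto intro!: polyhedron_Inter simp: polyhedron_halfspace_le)
qed

definition prj :: "'n set \<Rightarrow> real^'n \<Rightarrow> real^'n" where
  "prj Zc x = (\<chi> k. if k \<in> Zc then x$k else 0)"

lemma linear_prj: "linear (prj Zc)"
  by (rule linearI) (auto simp: prj_def vec_eq_iff)

lemma finite_bounded_int:
  fixes S :: "(real^'n::finite) set"
  assumes b: "bounded S" and int: "\<And>x k. x \<in> S \<Longrightarrow> x$k \<in> \<int>"
  shows "finite S"
proof -
  obtain B where B: "\<And>x. x \<in> S \<Longrightarrow> norm x \<le> B" using b bounded_iff by blast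
  define c where "c = \<lceil>B\<rceil>"
  define g where "g = (\<lambda>f::'n \<Rightarrow> int. \<chi> k. real_of_int (f k))"
  have "S \<subseteq> g ` (\<Pi>\<^sub>E k\<in>UNIV. {-c..c})"
  proof
    fix x assume x: "x \<in> S"
    define f where "f = (\<lambda>k. \<lfloor>x$k\<rfloor>)"
    have xk: "x$k = real_of_int (f k)" for k using int[OF x, of k] by (auto simp: f_def elim: Ints_cases)
    have "\<bar>x$k\<bar> \<le> B" for k using B[OF x] component_le_norm_cart[of x k] by linarith
    have "f k \<in> {-c..c}" for k
    proof -
      have a: "x$k \<le> B" "-B \<le> x$k" using \<open>\<bar>x$k\<bar> \<le> B\<close> by auto
      have bc: "B \<le> real_of_int c" using le_of_int_ceiling[of B] unfolding c_def .
      have "real_of_int (f k) \<le> real_of_int c" using a xk[of k] bc by linarith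
      moreover have "real_of_int (-c) \<le> real_of_int (f k)" unfolding of_int_minus using a xk[of k] bc by linarith
      ultimately have "real_of_int (f k) \<le> real_of_int c" "real_of_int (-c) \<le> real_of_int (f k)" by auto
      thus ?thesis by (simp only: of_int_le_iff atLeastAtMost_iff)
    qed
    hence "f \<in> (\<Pi>\<^sub>E k\<in>UNIV. {-c..c})" by auto
    moreover have "x = g f" using xk by (simp add: g_def vec_eq_iff)
    ultimately show "x \<in> g ` (\<Pi>\<^sub>E k\<in>UNIV. {-c..c})" by blast
  qed
  moreover have "finite (g ` (\<Pi>\<^sub>E k\<in>UNIV. {-c..c}))" by (intro finite_imageI finite_PiE) auto
  ultimately show ?thesis by (rule finite_subset)
qed

lemma convex_hull_Union_hulls:
  "convex hull (\<Union>a\<in>P. convex hull (V a)) = convex hull (\<Union>a\<in>P. V a)"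
proof
  show "convex hull (\<Union>a\<in>P. convex hull V a) \<subseteq> convex hull (\<Union>a\<in>P. V a)"
    by (rule hull_minimal) (auto intro: hull_mono[THEN subsetD] simp: convex_convex_hull)
  show "convex hull (\<Union>a\<in>P. V a) \<subseteq> convex hull (\<Union>a\<in>P. convex hull V a)"
    by (rule hull_mono) (auto intro: hull_inc)
qed

lemma polytope_mip:
  fixes D :: "real^'n::finite^'m::finite"
  assumes X: "compact (mip_set Zc D d)"
  shows "polytope (convex hull (mip_set Zc D d))"
proof -
  define X where "X = mip_set Zc D d"
  define Pat where "Pat = prj Zc ` X"
  define sl where "sl = (\<lambda>a. {x. D *v x \<in> {u. u \<le> d}} \<inter> {x. prj Zc x \<in> {a}})"
  have finPat: "finite Pat"
  proof (rule finite_bounded_int)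
    show "bounded Pat" unfolding Pat_def X_def
      using X compact_imp_bounded compact_continuous_image linear_continuous_on[OF linear_conv_bounded_linear[THEN iffD1, OF linear_prj]] by blast
  next
    fix x k assume "x \<in> Pat"
    then obtain x0 where "x0 \<in> X" "x = prj Zc x0" unfolding Pat_def by blast
    thus "x$k \<in> \<int>" by (auto simp: prj_def X_def mip_set_def)
  qed
  have Xeq: "X = (\<Union>a\<in>Pat. sl a)"
  proof
    show "X \<subseteq> (\<Union>a\<in>Pat. sl a)" by (auto simp: Pat_def sl_def X_def mip_set_def)
  next
    show "(\<Union>a\<in>Pat. sl a) \<subseteq> X"
    proof
      fix x assume "x \<in> (\<Union>a\<in>Pat. sl a)"
      then obtain x0 where x0: "x0 \<in> X" "D *v x \<le> d" "prj Zc x = prj Zc x0"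
        by (auto simp: Pat_def sl_def)
      have "x$k \<in> \<int>" if "k \<in> Zc" for k
      proof -
        have "x$k = x0$k" using arg_cong[OF x0(3), of "\<lambda>v. v$k"] that by (simp add: prj_def)
        thus ?thesis using x0(1) that by (auto simp: X_def mip_set_def)
      qed
      thus "x \<in> X" using x0 by (auto simp: X_def mip_set_def)
    qed
  qed
  have "\<exists>V. finite V \<and> sl a = convex hull V" if "a \<in> Pat" for a
  proof -
    have p1: "polyhedron {x. D *v x \<in> {u. u \<le> d}}"
      by (rule polyhedron_preimage[OF polyhedron_le_vec matrix_vector_mul_linear])
    have p2: "polyhedron {x. prj Zc x \<in> {a}}"
      by (rule polyhedron_preimage[OF polytope_imp_polyhedron[OF polytope_sing] linear_prj])
    have "polyhedron (sl a)" unfolding sl_def using p1 p2 by (rule polyhedron_Int)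
    moreover have "bounded (sl a)"
    proof -
      have "sl a \<subseteq> X" using that Xeq by blast
      thus ?thesis using bounded_subset[OF compact_imp_bounded[OF X]] unfolding X_def by blast
    qed
    ultimately have "polytope (sl a)" by (simp add: polytope_eq_bounded_polyhedron)
    thus ?thesis unfolding polytope_def .
  qed
  then obtain V where V: "\<And>a. a \<in> Pat \<Longrightarrow> finite (V a) \<and> sl a = convex hull (V a)" by metis
  have "convex hull X = convex hull (\<Union>a\<in>Pat. convex hull (V a))"
    using V by (simp add: Xeq)
  also have "\<dots> = convex hull (\<Union>a\<in>Pat. V a)" by (rule convex_hull_Union_hulls)
  finally have eqX: "convex hull X = convex hull (\<Union>a\<in>Pat. V a)" .
  have "finite (\<Union>a\<in>Pat. V a)" using V finPat by blast
  hence "polytope (convex hull (\<Union>a\<in>Pat. V a))" by (rule polytope_convex_hull)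
  thus ?thesis using eqX unfolding X_def by simp
qed


lemma polytope_prod:
  fixes K :: "'i::finite \<Rightarrow> (real^'n::finite) set"
  assumes P: "\<And>i. polytope (K i)"
  shows "polytope {Z::(real^'n)^'i. \<forall>i. Z$i \<in> K i}"
proof -
  have eq: "{Z::(real^'n)^'i. \<forall>i. Z$i \<in> K i} = \<Inter>((\<lambda>i. {Z. Z$i \<in> K i}) ` UNIV)" by auto
  have "polyhedron {Z::(real^'n)^'i. \<forall>i. Z$i \<in> K i}" unfolding eq
  proof (rule polyhedron_Inter)
    fix S assume "S \<in> (\<lambda>i. {Z::(real^'n)^'i. Z$i \<in> K i}) ` UNIV"
    then obtain i where i: "S = {Z. Z$i \<in> K i}" by blast
    show "polyhedron S" unfolding i
      by (rule polyhedron_preimage[OF polytope_imp_polyhedron[OF P] bounded_linear.linear[OF bounded_linear_vec_nth]])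
  qed simp
  moreover have "bounded {Z::(real^'n)^'i. \<forall>i. Z$i \<in> K i}"
  proof -
    have "\<exists>B. \<forall>x\<in>K i. norm x \<le> B" for i using polytope_imp_bounded[OF P] bounded_iff by blast
    then obtain B where B: "\<And>i x. x \<in> K i \<Longrightarrow> norm x \<le> B i" by metis
    have "norm Z \<le> (\<Sum>i\<in>UNIV. B i)" if "\<forall>i. Z$i \<in> K i" for Z :: "(real^'n)^'i"
    proof -
      have "norm Z \<le> (\<Sum>i\<in>UNIV. norm (Z$i))" unfolding norm_vec_def by (rule L2_set_le_sum) simp
      also have "\<dots> \<le> (\<Sum>i\<in>UNIV. B i)" using B that by (intro sum_mono) auto
      finally show ?thesis .
    qed
    thus ?thesis unfolding bounded_iff by blast
  qed
  ultimately show ?thesis by (simp add: polytope_eq_bounded_polyhedron)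
qed

lemma linear_G:
  fixes A :: "'i::finite \<Rightarrow> real^'n::finite^'s::finite"
  shows "linear (\<lambda>p::((real^'n)^'i) \<times> real. (\<Sum>i\<in>UNIV. A i *v (fst p $ i)) - vec (snd p))"
proof (rule linearI)
  fix x y :: "((real^'n)^'i) \<times> real"
  show "(\<Sum>i\<in>UNIV. A i *v (fst (x + y) $ i)) - vec (snd (x + y)) =
    ((\<Sum>i\<in>UNIV. A i *v (fst x $ i)) - vec (snd x)) + ((\<Sum>i\<in>UNIV. A i *v (fst y $ i)) - vec (snd y))"
    by (simp add: matrix_vector_right_distrib sum.distrib vec_add)
next
  fix a :: real and x :: "((real^'n)^'i) \<times> real"
  show "(\<Sum>i\<in>UNIV. A i *v (fst (a *\<^sub>R x) $ i)) - vec (snd (a *\<^sub>R x)) =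
     a *\<^sub>R ((\<Sum>i\<in>UNIV. A i *v (fst x $ i)) - vec (snd x))"
    by (simp add: matrix_vector_mult_scaleR scaleR_sum_right scaleR_diff_right vec_scaleR)
qed

lemma LPr_cost_vec: "LPr_cost c z = (\<chi> i. c i) \<bullet> (\<chi> i. z i)"
  by (simp add: LPr_cost_def inner_vec_def)

lemma exact_penalty:
  fixes c :: "'i::finite \<Rightarrow> real^'n::finite" and A :: "'i \<Rightarrow> real^'n^'s::finite"
    and X :: "'i \<Rightarrow> (real^'n) set"
  assumes polyt: "\<And>i. polytope (convex hull X i)"
    and opt: "LPr_optimal c A X b r zo"
  shows "\<exists>\<Lambda>\<ge>0. \<forall>z V. (\<forall>i. z i \<in> convex hull X i) \<longrightarrow> V \<ge> 0 \<longrightarrow>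
           (\<Sum>i\<in>UNIV. A i *v z i) \<le> b - r + vec V \<longrightarrow> LPr_cost c zo - \<Lambda> * V \<le> LPr_cost c z"
proof -
  define K where "K = {Z::(real^'n)^'i. \<forall>i. Z$i \<in> convex hull X i}"
  have polyK: "polytope K" unfolding K_def by (rule polytope_prod[OF polyt])
  define G where "G = (\<lambda>p::((real^'n)^'i) \<times> real. (\<Sum>i\<in>UNIV. A i *v (fst p $ i)) - vec (snd p))"
  have linG: "linear G"
    unfolding G_def by (rule linear_G)
  define P where "P = (K \<times> cbox 0 (1::real)) \<inter> {p. G p \<in> {u. u \<le> b - r}}"
  have "polytope P" unfolding P_def
    by (rule polytope_Int_polyhedron[OF polytope_Times[OF polyK polytope_interval]
          polyhedron_preimage[OF polyhedron_le_vec linG]])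
  then obtain E where E: "finite E" "P = convex hull E" unfolding polytope_def by blast
  define LP where "LP = LPr_cost c zo"
  define Cv where "Cv = (\<chi> i. c i)"
  define \<Lambda>1 where "\<Lambda>1 = (\<Sum>e\<in>E. \<bar>LP - Cv \<bullet> fst e\<bar> / snd e)"
  have Epos: "snd e \<ge> 0" if eE: "e \<in> E" for e
  proof -
    have eP: "e \<in> P" unfolding E(2) by (rule hull_inc[OF eE])
    obtain Z0 V0 where ZV: "e = (Z0, V0)" by (cases e)
    show ?thesis using eP unfolding P_def ZV by (simp add: mem_box_real)
  qed
  have claim1: "LP \<le> Cv \<bullet> fst e + \<Lambda>1 * snd e" if eE: "e \<in> E" for e
  proof -
    have eP: "e \<in> P" unfolding E(2) by (rule hull_inc[OF eE])
    obtain Z0 V0 where ZV: "e = (Z0, V0)" by (cases e)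
    have e1: "fst e \<in> K" "0 \<le> snd e" "(\<Sum>i\<in>UNIV. A i *v (fst e $ i)) - vec (snd e) \<le> b - r"
      using eP unfolding P_def G_def ZV by (simp_all add: mem_box_real)
    show ?thesis
    proof (cases "snd e = 0")
      case True
      have "(\<Sum>i\<in>UNIV. A i *v (fst e $ i)) \<le> b - r" using e1(3) True by (simp add: vec_0)
      moreover have "\<forall>i. fst e $ i \<in> convex hull X i" using e1(1) by (simp add: K_def)
      ultimately have "LPr_feasible c A X b r (\<lambda>i. fst e $ i)"
        unfolding LPr_feasible_def by blast
      hence "LP \<le> LPr_cost c (\<lambda>i. fst e $ i)" using opt by (auto simp: LPr_optimal_def LP_def)
      thus ?thesis using True by (simp add: LPr_cost_vec Cv_def)
    next
      case False
      hence pos: "snd e > 0" using e1 by simp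
      have "\<bar>LP - Cv \<bullet> fst e\<bar> / snd e \<le> \<Lambda>1"
        unfolding \<Lambda>1_def using E(1) eE Epos by (intro member_le_sum) auto
      hence "\<bar>LP - Cv \<bullet> fst e\<bar> \<le> \<Lambda>1 * snd e" using pos by (simp add: field_simps)
      thus ?thesis by linarith
    qed
  qed
  have claim2: "P \<subseteq> {p. (Cv, \<Lambda>1) \<bullet> p \<ge> LP}"
    unfolding E(2)
  proof (rule hull_minimal)
    show "E \<subseteq> {p. (Cv, \<Lambda>1) \<bullet> p \<ge> LP}" using claim1 by (auto simp: inner_prod_def)
    show "convex {p. (Cv, \<Lambda>1) \<bullet> p \<ge> LP}" by (rule convex_halfspace_ge)
  qed
  from polytope_imp_bounded[OF polyK] obtain B where B: "\<And>Z. Z \<in> K \<Longrightarrow> norm Z \<le> B"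
    unfolding bounded_iff by blast
  define \<Lambda> where "\<Lambda> = max \<Lambda>1 (max 0 (LP + norm Cv * B))"
  have "LP - \<Lambda> * V \<le> LPr_cost c z"
    if z: "\<forall>i. z i \<in> convex hull X i" and V: "V \<ge> 0" and con: "(\<Sum>i\<in>UNIV. A i *v z i) \<le> b - r + vec V"
    for z V
  proof -
    define Z where "Z = (\<chi> i. z i)"
    have ZK: "Z \<in> K" using z by (simp add: K_def Z_def)
    have cost: "LPr_cost c z = Cv \<bullet> Z" by (simp add: LPr_cost_vec Cv_def Z_def)
    show ?thesis
    proof (cases "V \<le> 1")
      case True
      have sZ: "(\<Sum>i\<in>UNIV. A i *v (Z$i)) = (\<Sum>i\<in>UNIV. A i *v z i)" by (simp add: Z_def)
      have "(\<Sum>i\<in>UNIV. A i *v z i) - vec V \<le> b - r" using con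
        unfolding less_eq_vec_def by (simp add: algebra_simps)
      hence "G (Z, V) \<in> {u. u \<le> b - r}" by (simp add: G_def sZ)
      moreover have "(Z, V) \<in> K \<times> cbox 0 1" using ZK True V by (simp add: mem_box_real)
      ultimately have "(Z, V) \<in> P" by (simp add: P_def)
      hence "LP \<le> Cv \<bullet> Z + \<Lambda>1 * V" using claim2 by (auto simp: inner_prod_def)
      moreover have "\<Lambda>1 * V \<le> \<Lambda> * V" using V by (intro mult_right_mono) (auto simp: \<Lambda>_def)
      ultimately show ?thesis using cost by linarith
    next
      case False
      have "- (norm Cv * B) \<le> Cv \<bullet> Z"
      proof -
        have "\<bar>Cv \<bullet> Z\<bar> \<le> norm Cv * norm Z" by (rule Cauchy_Schwarz_ineq2)
        also have "\<dots> \<le> norm Cv * B" using B[OF ZK] by (intro mult_left_mono) auto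
        finally show ?thesis by linarith
      qed
      moreover have "\<Lambda> \<le> \<Lambda> * V"
      proof -
        have "0 \<le> \<Lambda>" by (simp add: \<Lambda>_def)
        thus ?thesis using False mult_left_mono[of 1 V \<Lambda>] by simp
      qed
      moreover have "LP + norm Cv * B \<le> \<Lambda>" by (simp add: \<Lambda>_def)
      ultimately show ?thesis using cost by linarith
    qed
  qed
  moreover have "\<Lambda> \<ge> 0" by (simp add: \<Lambda>_def)
  ultimately show ?thesis unfolding LP_def by blast
qed


lemma inner_nonneg_nonpos:
  fixes mu w :: "real^'s::finite"
  assumes "0 \<le> mu" "w \<le> 0"
  shows "mu \<bullet> w \<le> 0"
  using assms unfolding inner_vec_def less_eq_vec_def
  by (auto intro!: sum_nonpos mult_nonneg_nonpos)

lemma inner_vec_one: "(mu::real^'s::finite) \<bullet> vec 1 = (\<Sum>s\<in>UNIV. mu$s)"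
  by (simp add: inner_vec_def)

lemma P1_mu_bound:
  assumes "P1_primal_dual_opt ci Ai Xi M y z v mu"
  shows "0 \<le> mu" "mu \<bullet> vec 1 \<le> M" "norm mu \<le> M"
proof -
  from assms have z: "z \<in> convex hull Xi" and v: "v \<ge> 0" and m: "mu \<ge> 0"
    and sad: "P1_lagr ci Ai M y z v mu \<le> P1_lagr ci Ai M y z (v + 1) mu"
    unfolding P1_primal_dual_opt_def by auto
  show "0 \<le> mu" by (rule m)
  have e: "mu \<bullet> vec (v + 1) = mu \<bullet> vec v + mu \<bullet> vec 1"
    by (simp only: vec_add inner_add_right)
  have "P1_lagr ci Ai M y z (v + 1) mu = P1_lagr ci Ai M y z v mu + M - mu \<bullet> vec 1"
    unfolding P1_lagr_def inner_diff_right e by (simp add: algebra_simps)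
  thus b: "mu \<bullet> vec 1 \<le> M" using sad by simp
  have "norm mu \<le> (\<Sum>s\<in>UNIV. \<bar>mu$s\<bar>)" by (rule norm_le_l1_cart)
  also have "\<dots> = mu \<bullet> vec 1" unfolding inner_vec_one using m by (simp add: less_eq_vec_def)
  finally show "norm mu \<le> M" using b by simp
qed

lemma P1_subgrad:
  assumes opt: "P1_primal_dual_opt ci Ai Xi M y z v mu"
    and z': "z' \<in> convex hull Xi" and v': "v' \<ge> 0" and f': "Ai *v z' \<le> y' + vec v'"
  shows "ci \<bullet> z + M * v \<le> ci \<bullet> z' + M * v' + mu \<bullet> (y' - y)"
proof -
  from opt have m: "mu \<ge> 0"
    and s1: "P1_lagr ci Ai M y z v 0 \<le> P1_lagr ci Ai M y z v mu"
    and s2: "P1_lagr ci Ai M y z v mu \<le> P1_lagr ci Ai M y z' v' mu"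
    unfolding P1_primal_dual_opt_def using z' v' by auto
  have neg: "mu \<bullet> (Ai *v z' - y' - vec v') \<le> 0"
    using f' by (intro inner_nonneg_nonpos[OF m]) (simp add: less_eq_vec_def diff_le_eq add.commute)
  have "P1_lagr ci Ai M y z' v' mu = ci \<bullet> z' + M * v' + mu \<bullet> (Ai *v z' - y' - vec v') + mu \<bullet> (y' - y)"
    unfolding P1_lagr_def by (simp add: inner_diff_right)
  thus ?thesis using s1 s2 neg unfolding P1_lagr_def by simp
qed


locale alg =
  fixes c :: "'i::finite \<Rightarrow> real^'n::finite"
    and A :: "'i \<Rightarrow> real^'n^'s::finite"
    and X :: "'i \<Rightarrow> (real^'n) set"
    and b r :: "real^'s"
    and Nb :: "'i \<Rightarrow> 'i set"
    and \<alpha> :: "nat \<Rightarrow> real"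
    and M \<Lambda> :: real
    and zo :: "'i \<Rightarrow> real^'n"
    and y :: "'i \<Rightarrow> nat \<Rightarrow> real^'s" and z :: "'i \<Rightarrow> nat \<Rightarrow> real^'n"
    and v :: "'i \<Rightarrow> nat \<Rightarrow> real" and \<mu> :: "'i \<Rightarrow> nat \<Rightarrow> real^'s"
  assumes Kcomp: "\<And>i. compact (convex hull X i)"
    and g: "connected_undirected Nb"
    and apos: "\<And>t. \<alpha> t \<ge> 0" and anot: "\<not> summable \<alpha>" and asq: "summable (\<lambda>t. (\<alpha> t)\<^sup>2)"
    and sad: "\<And>i t. P1_primal_dual_opt (c i) (A i) (X i) M (y i t) (z i t) (v i t) (\<mu> i t)"
    and upd: "\<And>i t. y i (Suc t) = y i t + \<alpha> t *\<^sub>R (\<Sum>j\<in>Nb i. \<mu> i t - \<mu> j t)"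
    and sum0: "(\<Sum>i\<in>UNIV. y i 0) = b - r"
    and zo: "LPr_optimal c A X b r zo"
    and EP: "\<And>z V. (\<forall>i. z i \<in> convex hull X i) \<Longrightarrow> V \<ge> 0 \<Longrightarrow>
           (\<Sum>i\<in>UNIV. A i *v z i) \<le> b - r + vec V \<Longrightarrow> LPr_cost c zo - \<Lambda> * V \<le> LPr_cost c z"
    and Lpos: "\<Lambda> \<ge> 0" and Mdef: "M = \<Lambda> + 1"
begin

abbreviation "K i \<equiv> convex hull X i"
definition "LP = LPr_cost c zo"
definition "Y t = (\<chi> i. y i t)"
definition "U t = (\<chi> i. \<mu> i t)"
definition "Fv t = (\<Sum>i\<in>UNIV. c i \<bullet> z i t + M * v i t)"
definition "Vs t = (\<Sum>i\<in>UNIV. v i t)"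
definition "W t = (\<Sum>k<t. \<alpha> k *\<^sub>R U k)"
definition "NN = real CARD('i)"
definition "good Yh zh \<longleftrightarrow> (\<Sum>i\<in>UNIV. Yh$i) = b - r \<and> (\<forall>i. zh i \<in> K i \<and> A i *v zh i \<le> Yh$i)
     \<and> LPr_cost c zh = LP"

lemma sym: "j \<in> Nb i \<longleftrightarrow> i \<in> Nb j" by (rule conn_sym[OF g])

lemma lapU: "lap Nb (U t) $ i = (\<Sum>j\<in>Nb i. \<mu> i t - \<mu> j t)"
  by (simp add: lap_nth U_def)

lemma Y_suc: "Y (Suc t) = Y t + \<alpha> t *\<^sub>R lap Nb (U t)"
  by (simp add: Y_def vec_eq_iff upd lapU)

lemma sum_inv: "(\<Sum>i\<in>UNIV. y i t) = b - r"
proof (induction t)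
  case 0 then show ?case by (rule sum0)
next
  case (Suc t)
  have "(\<Sum>i\<in>UNIV. y i (Suc t)) = (\<Sum>i\<in>UNIV. y i t) + \<alpha> t *\<^sub>R (\<Sum>i\<in>UNIV. lap Nb (U t) $ i)"
    by (simp add: upd sum.distrib scaleR_sum_right lapU)
  also have "\<dots> = (\<Sum>i\<in>UNIV. y i t)" by (simp add: sum_lap[OF sym])
  finally show ?case using Suc by simp
qed

lemma Y_W: "Y t = Y 0 + lap Nb (W t)"
proof (induction t)
  case 0 then show ?case by (simp add: W_def linear_0[OF linear_lap])
next
  case (Suc t)
  have "W (Suc t) = W t + \<alpha> t *\<^sub>R U t" by (simp add: W_def)
  hence "lap Nb (W (Suc t)) = lap Nb (W t) + \<alpha> t *\<^sub>R lap Nb (U t)"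
    by (simp add: linear_add[OF linear_lap] linear_scale[OF linear_lap])
  thus ?case using Suc Y_suc by simp
qed

lemma feas: "z i t \<in> K i" "v i t \<ge> 0" "A i *v z i t \<le> y i t + vec (v i t)"
  using sad[of i t] unfolding P1_primal_dual_opt_def by auto

lemma Mpos: "M \<ge> 1" using Lpos Mdef by simp

lemma Vs_nonneg: "Vs t \<ge> 0" unfolding Vs_def using feas(2) by (auto intro: sum_nonneg)

lemma F_lower: "LP + Vs t \<le> Fv t"
proof -
  have "(\<Sum>i\<in>UNIV. A i *v z i t) \<le> (\<Sum>i\<in>UNIV. y i t + vec (v i t))"
    by (rule sum_mono) (rule feas(3))
  also have "\<dots> = b - r + vec (Vs t)"
    by (simp add: sum.distrib sum_inv Vs_def vec_eq_iff)
  finally have "LP - \<Lambda> * Vs t \<le> LPr_cost c (\<lambda>i. z i t)"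
    using EP[of "\<lambda>i. z i t" "Vs t"] feas(1) Vs_nonneg[of t] unfolding LP_def by blast
  moreover have "Fv t = LPr_cost c (\<lambda>i. z i t) + M * Vs t"
    by (simp add: Fv_def LPr_cost_def Vs_def sum.distrib sum_distrib_left)
  ultimately show ?thesis using Mdef by (simp add: algebra_simps)
qed

lemma v_le: "v i t \<le> Fv t - LP"
proof -
  have "v i t \<le> Vs t" unfolding Vs_def using feas(2) by (intro member_le_sum) auto
  thus ?thesis using F_lower[of t] by simp
qed

lemma mu_norm: "norm (\<mu> i t) \<le> M" using P1_mu_bound(3)[OF sad] .

lemma U_norm: "norm (U t) \<le> NN * M"
proof -
  have "norm (U t) \<le> (\<Sum>i\<in>UNIV. norm (\<mu> i t))" unfolding norm_vec_def U_def
    by (simp add: L2_set_le_sum)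
  also have "\<dots> \<le> (\<Sum>i\<in>(UNIV::'i set). M)" by (intro sum_mono mu_norm)
  finally show ?thesis by (simp add: NN_def)
qed

lemma F_upper:
  assumes gd: "good Yh zh"
  shows "Fv t \<le> LP - U t \<bullet> (Y t - Yh)"
proof -
  have "c i \<bullet> z i t + M * v i t \<le> c i \<bullet> zh i + M * 0 + \<mu> i t \<bullet> (Yh$i - y i t)" for i
    using gd by (intro P1_subgrad[OF sad]) (auto simp: good_def)
  hence "Fv t \<le> (\<Sum>i\<in>UNIV. c i \<bullet> zh i + \<mu> i t \<bullet> (Yh$i - y i t))"
    unfolding Fv_def by (intro sum_mono) simp
  also have "\<dots> = LPr_cost c zh + (\<Sum>i\<in>UNIV. \<mu> i t \<bullet> (Yh$i - y i t))"
    by (simp add: sum.distrib LPr_cost_def)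
  also have "(\<Sum>i\<in>UNIV. \<mu> i t \<bullet> (Yh$i - y i t)) = - (U t \<bullet> (Y t - Yh))"
  proof -
    have "U t \<bullet> (Y t - Yh) = (\<Sum>i\<in>UNIV. \<mu> i t \<bullet> (y i t - Yh$i))"
      by (simp add: inner_vec_def U_def Y_def)
    also have "\<dots> = - (\<Sum>i\<in>UNIV. \<mu> i t \<bullet> (Yh$i - y i t))"
      by (simp add: sum_negf[symmetric] inner_diff_right)
    finally show ?thesis by simp
  qed
  finally show ?thesis using gd by (simp add: good_def)
qed

definition "GG = 2 * NN\<^sup>2 * M\<^sup>2"

lemma UlapU: "U t \<bullet> lap Nb (U t) \<le> GG"
proof -
  have "U t \<bullet> lap Nb (U t) = (1/2) * (\<Sum>i\<in>UNIV. \<Sum>j\<in>Nb i. (norm (U t $ i - U t $ j))\<^sup>2)"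
    by (rule lap_psd[OF sym])
  also have "\<dots> \<le> (1/2) * (\<Sum>i\<in>(UNIV::'i set). NN * (2*M)\<^sup>2)"
  proof (intro mult_left_mono sum_mono)
    fix i :: 'i
    have "(\<Sum>j\<in>Nb i. (norm (U t $ i - U t $ j))\<^sup>2) \<le> (\<Sum>j\<in>Nb i. (2*M)\<^sup>2)"
    proof (rule sum_mono)
      fix j
      have "norm (U t $ i - U t $ j) \<le> norm (\<mu> i t) + norm (\<mu> j t)"
        unfolding U_def by (simp add: norm_triangle_ineq4)
      also have "\<dots> \<le> 2 * M" using mu_norm[of i t] mu_norm[of j t] by simp
      finally show "(norm (U t $ i - U t $ j))\<^sup>2 \<le> (2*M)\<^sup>2" by (intro power_mono) auto
    qed
    also have "\<dots> = card (Nb i) * (2*M)\<^sup>2" by simp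
    also have "\<dots> \<le> NN * (2*M)\<^sup>2" unfolding NN_def
      by (intro mult_right_mono) (auto simp: card_mono)
    finally show "(\<Sum>j\<in>Nb i. (norm (U t $ i - U t $ j))\<^sup>2) \<le> NN * (2*M)\<^sup>2" .
  qed simp
  also have "\<dots> = GG" by (simp add: GG_def NN_def power2_eq_square)
  finally show ?thesis .
qed

lemma Qrec:
  assumes gd: "good Yh zh" and wh: "lap Nb wh = Yh - Y 0"
  shows "(W (Suc t) - wh) \<bullet> lap Nb (W (Suc t) - wh)
     \<le> (W t - wh) \<bullet> lap Nb (W t - wh) - 2 * \<alpha> t * (Fv t - LP) + (\<alpha> t)\<^sup>2 * GG"
proof -
  define e where "e = W t - wh"
  define a where "a = \<alpha> t"
  have eS: "W (Suc t) - wh = e + a *\<^sub>R U t" by (simp add: W_def e_def a_def algebra_simps)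
  have le: "lap Nb e = Y t - Yh"
    using Y_W[of t] wh by (simp add: e_def linear_diff[OF linear_lap])
  have "(e + a *\<^sub>R U t) \<bullet> lap Nb (e + a *\<^sub>R U t)
      = e \<bullet> lap Nb e + a * (e \<bullet> lap Nb (U t)) + a * (U t \<bullet> lap Nb e) + a\<^sup>2 * (U t \<bullet> lap Nb (U t))"
    by (simp add: linear_add[OF linear_lap] linear_scale[OF linear_lap] inner_add_left inner_add_right
        power2_eq_square algebra_simps)
  also have "e \<bullet> lap Nb (U t) = U t \<bullet> lap Nb e" by (rule lap_symm[OF sym])
  finally have "(e + a *\<^sub>R U t) \<bullet> lap Nb (e + a *\<^sub>R U t)
      = e \<bullet> lap Nb e + 2 * a * (U t \<bullet> (Y t - Yh)) + a\<^sup>2 * (U t \<bullet> lap Nb (U t))"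
    using le by simp
  moreover have "a * (U t \<bullet> (Y t - Yh)) \<le> a * (LP - Fv t)"
    using F_upper[OF gd, of t] apos[of t] unfolding a_def by (intro mult_left_mono) auto
  moreover have "a\<^sup>2 * (U t \<bullet> lap Nb (U t)) \<le> a\<^sup>2 * GG" by (intro mult_left_mono UlapU) simp
  ultimately show ?thesis unfolding eS[symmetric] e_def[symmetric] a_def[symmetric]
    by (simp add: algebra_simps)
qed

end

context alg begin

definition "Qf wh t = (W t - wh) \<bullet> lap Nb (W t - wh)"

lemma good_range: assumes "good Yh zh" shows "\<exists>wh. lap Nb wh = Yh - Y 0"
proof (rule lap_onto[OF g])
  show "Yh - Y 0 \<in> Hsp" using assms sum0
    by (simp add: Hsp_def good_def Y_def sum_subtractf)
qed

lemma Qf_nonneg: "Qf wh t \<ge> 0" unfolding Qf_def by (rule lap_psd_nonneg[OF sym])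

lemma Qbound:
  assumes gd: "good Yh zh" and wh: "lap Nb wh = Yh - Y 0"
  shows "Qf wh T + 2 * (\<Sum>t<T. \<alpha> t * (Fv t - LP)) \<le> Qf wh 0 + GG * (\<Sum>t<T. (\<alpha> t)\<^sup>2)"
proof (induction T)
  case 0 then show ?case by simp
next
  case (Suc T)
  have "Qf wh (Suc T) \<le> Qf wh T - 2 * \<alpha> T * (Fv T - LP) + (\<alpha> T)\<^sup>2 * GG"
    unfolding Qf_def by (rule Qrec[OF gd wh])
  thus ?case using Suc by (simp add: algebra_simps)
qed

lemma Qmono:
  assumes gd: "good Yh zh" and wh: "lap Nb wh = Yh - Y 0" and st: "s \<le> t"
  shows "Qf wh t \<le> Qf wh s + GG * (\<Sum>k\<in>{s..<t}. (\<alpha> k)\<^sup>2)"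
  using st
proof (induction t)
  case 0 then show ?case by simp
next
  case (Suc t)
  show ?case
  proof (cases "s = Suc t")
    case True then show ?thesis by simp
  next
    case False
    hence st: "s \<le> t" using Suc.prems by simp
    have "Qf wh (Suc t) \<le> Qf wh t - 2 * \<alpha> t * (Fv t - LP) + (\<alpha> t)\<^sup>2 * GG"
      unfolding Qf_def by (rule Qrec[OF gd wh])
    moreover have "\<alpha> t * (Fv t - LP) \<ge> 0" using apos[of t] F_lower[of t] Vs_nonneg[of t] by simp
    moreover have "(\<Sum>k\<in>{s..<Suc t}. (\<alpha> k)\<^sup>2) = (\<Sum>k\<in>{s..<t}. (\<alpha> k)\<^sup>2) + (\<alpha> t)\<^sup>2"
      using st by simp
    ultimately show ?thesis using Suc.IH[OF st] by (simp add: algebra_simps)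
  qed
qed

definition "Yo = (\<chi> i. A i *v zo i + (1 / NN) *\<^sub>R (b - r - (\<Sum>j\<in>UNIV. A j *v zo j)))"

lemma NN_pos: "NN > 0" by (simp add: NN_def)

lemma good_Yo: "good Yo zo"
proof -
  have f: "(\<Sum>j\<in>UNIV. A j *v zo j) \<le> b - r" "\<forall>i. zo i \<in> K i"
    using zo by (auto simp: LPr_optimal_def LPr_feasible_def)
  have sl: "0 \<le> (1 / NN) *\<^sub>R (b - r - (\<Sum>j\<in>UNIV. A j *v zo j))"
    using f(1) NN_pos by (simp add: less_eq_vec_def)
  define sl where "sl = b - r - (\<Sum>j\<in>UNIV. A j *v zo j)"
  have "(\<Sum>i\<in>UNIV. Yo$i) = (\<Sum>j\<in>UNIV. A j *v zo j) + (\<Sum>i\<in>(UNIV::'i set). (1 / NN) *\<^sub>R sl)"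
    by (simp add: Yo_def sum.distrib sl_def)
  also have "(\<Sum>i\<in>(UNIV::'i set). (1 / NN) *\<^sub>R sl) = sl"
  proof -
    have "NN * (1/NN) = 1" using NN_pos by simp
    thus ?thesis by (simp only: sum_constant_scaleR scaleR_scaleR NN_def[symmetric] scaleR_one)
  qed
  also have "(\<Sum>j\<in>UNIV. A j *v zo j) + sl = b - r" by (simp add: sl_def)
  finally have "(\<Sum>i\<in>UNIV. Yo$i) = b - r" .
  moreover have "A i *v zo i \<le> Yo$i" for i using sl by (simp add: Yo_def)
  ultimately show ?thesis using f(2) by (simp add: good_def LP_def)
qed

definition "S2 = suminf (\<lambda>t. (\<alpha> t)\<^sup>2)"

lemma partial_sq: "(\<Sum>t<T. (\<alpha> t)\<^sup>2) \<le> S2"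
  unfolding S2_def by (rule sum_le_suminf[OF asq]) auto

lemma summable_gap: "summable (\<lambda>t. \<alpha> t * (Fv t - LP))"
proof -
  obtain wo where wo: "lap Nb wo = Yo - Y 0" using good_range[OF good_Yo] by blast
  show ?thesis
  proof (rule summableI_nonneg_bounded)
    fix n show "0 \<le> \<alpha> n * (Fv n - LP)" using apos[of n] F_lower[of n] Vs_nonneg[of n] by simp
  next
    fix T
    have "2 * (\<Sum>t<T. \<alpha> t * (Fv t - LP)) \<le> Qf wo 0 + GG * (\<Sum>t<T. (\<alpha> t)\<^sup>2)"
      using Qbound[OF good_Yo wo, of T] Qf_nonneg[of wo T] by simp
    also have "\<dots> \<le> Qf wo 0 + GG * S2"
      using partial_sq[of T] by (intro add_left_mono mult_left_mono) (auto simp: GG_def)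
    finally show "(\<Sum>t<T. \<alpha> t * (Fv t - LP)) \<le> (Qf wo 0 + GG * S2) / 2" by simp
  qed
qed

lemma Y_bounded: "\<exists>R. \<forall>t. norm (Y t) \<le> R"
proof -
  obtain wo where wo: "lap Nb wo = Yo - Y 0" using good_range[OF good_Yo] by blast
  define B where "B = 2 * NN * (Qf wo 0 + GG * S2)"
  have "norm (Y t) \<le> norm Yo + 1 + B" for t
  proof -
    have Qt: "Qf wo t \<le> Qf wo 0 + GG * S2"
    proof -
      have "Qf wo t \<le> Qf wo 0 + GG * (\<Sum>k<t. (\<alpha> k)\<^sup>2)"
        using Qbound[OF good_Yo wo, of t] summable_gap
        by (smt (verit) apos F_lower Vs_nonneg mult_nonneg_nonneg sum_nonneg)
      also have "\<dots> \<le> Qf wo 0 + GG * S2"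
        using partial_sq[of t] by (intro add_left_mono mult_left_mono) (auto simp: GG_def)
      finally show ?thesis .
    qed
    have le: "lap Nb (W t - wo) = Y t - Yo"
      using Y_W[of t] wo by (simp add: linear_diff[OF linear_lap])
    have "(norm (Y t - Yo))\<^sup>2 \<le> 2 * NN * Qf wo t"
      using lap_norm_upper[OF sym, of "W t - wo"] unfolding le Qf_def NN_def by simp
    also have "\<dots> \<le> B" unfolding B_def using Qt NN_pos by simp
    finally have sq: "(norm (Y t - Yo))\<^sup>2 \<le> B" .
    have "norm (Y t - Yo) \<le> 1 + B"
    proof (cases "norm (Y t - Yo) \<le> 1")
      case True then show ?thesis using sq by (smt (verit) zero_le_power2)
    next
      case False
      hence "norm (Y t - Yo) \<le> (norm (Y t - Yo))\<^sup>2"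
        using mult_right_mono[of 1 "norm (Y t - Yo)" "norm (Y t - Yo)"] by (simp add: power2_eq_square)
      then show ?thesis using sq by simp
    qed
    thus ?thesis using norm_triangle_sub[of "Y t" Yo] by simp
  qed
  thus ?thesis by blast
qed

lemma liminf_gap:
  assumes "\<epsilon> > 0" shows "\<exists>t\<ge>T. Fv t - LP < \<epsilon>"
proof (rule ccontr)
  assume "\<not> ?thesis"
  hence h: "\<And>t. t \<ge> T \<Longrightarrow> Fv t - LP \<ge> \<epsilon>" by force
  have "summable \<alpha>"
  proof (rule summable_comparison_test')
    show "summable (\<lambda>t. \<alpha> t * (Fv t - LP) / \<epsilon>)" using summable_gap by (rule summable_divide)
    fix t assume "T \<le> t"
    hence "\<alpha> t * \<epsilon> \<le> \<alpha> t * (Fv t - LP)" using h apos by (intro mult_left_mono) auto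
    thus "norm (\<alpha> t) \<le> \<alpha> t * (Fv t - LP) / \<epsilon>" using assms apos[of t] by (simp add: field_simps)
  qed
  thus False using anot by simp
qed

end

context alg begin

definition "Zv t = (\<chi> i. z i t)"
definition "Kp = {Zb::(real^'n)^'i. \<forall>i. Zb$i \<in> K i}"

lemma compact_Kp: "compact Kp"
proof -
  have eq: "Kp = \<Inter>((\<lambda>i. (\<lambda>Z. Z$i) -` K i) ` UNIV)" by (auto simp: Kp_def)
  have cl: "closed Kp" unfolding eq
    by (intro closed_INT ballI closed_vimage_vec_nth compact_imp_closed Kcomp)
  have "\<exists>B. \<forall>x\<in>K i. norm x \<le> B" for i using compact_imp_bounded[OF Kcomp] bounded_iff by metis
  then obtain B where B: "\<And>i x. x \<in> K i \<Longrightarrow> norm x \<le> B i" by metis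
  have "norm Z \<le> (\<Sum>i\<in>UNIV. B i)" if "Z \<in> Kp" for Z
  proof -
    have "norm Z \<le> (\<Sum>i\<in>UNIV. norm (Z$i))" unfolding norm_vec_def by (rule L2_set_le_sum) simp
    also have "\<dots> \<le> (\<Sum>i\<in>UNIV. B i)" using B that by (intro sum_mono) (auto simp: Kp_def)
    finally show ?thesis .
  qed
  hence "bounded Kp" unfolding bounded_iff by blast
  thus ?thesis using cl by (simp add: compact_eq_bounded_closed)
qed

lemma Zv_Kp: "Zv t \<in> Kp" using feas(1) by (simp add: Zv_def Kp_def)

lemma cost_le_F: "LPr_cost c (\<lambda>i. z i t) \<le> Fv t"
  unfolding LPr_cost_def Fv_def using feas(2) Mpos
  by (intro sum_mono) (simp add: order_trans[OF _ mult_nonneg_nonneg])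

lemma F_ge: "LP \<le> Fv t" using F_lower[of t] Vs_nonneg[of t] by linarith

lemma good_limit: "\<exists>Yb zh tt. good Yb zh \<and> (\<forall>n. tt n \<ge> n) \<and> (\<lambda>n. Y (tt n)) \<longlonglongrightarrow> Yb"
proof -
  have "\<forall>k. \<exists>t\<ge>k. Fv t - LP < 1 / real (Suc k)" using liminf_gap by simp
  from choice[OF this] obtain tk where tk0: "\<forall>k. tk k \<ge> k \<and> Fv (tk k) - LP < 1 / real (Suc k)" by blast
  hence tk: "\<And>k. tk k \<ge> k" "\<And>k. Fv (tk k) - LP < 1 / real (Suc k)" by auto
  obtain R where R: "\<And>t. norm (Y t) \<le> R" using Y_bounded by blast
  define f where "f = (\<lambda>k. (Y (tk k), Zv (tk k)))"
  have "compact (cball (0::(real^'s)^'i) R \<times> Kp)" by (intro compact_Times compact_cball compact_Kp)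
  moreover have "\<forall>k. f k \<in> cball (0::(real^'s)^'i) R \<times> Kp" using R Zv_Kp by (simp add: f_def)
  ultimately obtain l rr where l: "l \<in> cball (0::(real^'s)^'i) R \<times> Kp" "strict_mono rr" "(f \<circ> rr) \<longlonglongrightarrow> l"
    using compact_imp_seq_compact seq_compactE by metis
  obtain Yb Zb where lYZ: "l = (Yb, Zb)" by (cases l)
  define tt where "tt = (\<lambda>n. tk (rr n))"
  have ttn: "tt n \<ge> n" for n using tk(1)[of "rr n"] seq_suble[OF l(2), of n] by (simp add: tt_def)
  have Yc: "(\<lambda>n. Y (tt n)) \<longlonglongrightarrow> Yb"
    using tendsto_fst[OF l(3)] by (simp add: lYZ f_def tt_def o_def)
  have Zc: "(\<lambda>n. Zv (tt n)) \<longlonglongrightarrow> Zb"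
    using tendsto_snd[OF l(3)] by (simp add: lYZ f_def tt_def o_def)
  have ZbK: "Zb \<in> Kp" using l(1) lYZ by simp
  have gap0: "(\<lambda>n. Fv (tt n) - LP) \<longlonglongrightarrow> 0"
  proof (rule tendsto_sandwich[of "\<lambda>n. 0" _ _ "\<lambda>n. 1 / real (Suc n)"])
    show "\<forall>\<^sub>F n in sequentially. 0 \<le> Fv (tt n) - LP"
      using F_ge by (simp add: always_eventually)
    have "Fv (tt n) - LP \<le> 1 / real (Suc n)" for n
    proof -
      have "1 / real (Suc (rr n)) \<le> 1 / real (Suc n)"
        using seq_suble[OF l(2), of n] by (intro divide_left_mono) auto
      thus ?thesis using tk(2)[of "rr n"] by (simp add: tt_def)
    qed
    thus "\<forall>\<^sub>F n in sequentially. Fv (tt n) - LP \<le> 1 / real (Suc n)" by simp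
    show "(\<lambda>n. 0) \<longlonglongrightarrow> (0::real)" by simp
    show "(\<lambda>n. 1 / real (Suc n)) \<longlonglongrightarrow> 0" by (rule LIMSEQ_inverse_real_of_nat[unfolded inverse_eq_divide])
  qed
  define zh where "zh = (\<lambda>i. Zb$i)"
  have sumYb: "(\<Sum>i\<in>UNIV. Yb$i) = b - r"
  proof -
    have "(\<lambda>n. \<Sum>i\<in>UNIV. Y (tt n) $ i) \<longlonglongrightarrow> (\<Sum>i\<in>UNIV. Yb$i)"
      by (intro tendsto_sum tendsto_vec_nth Yc)
    moreover have "(\<Sum>i\<in>UNIV. Y (tt n) $ i) = b - r" for n by (simp add: Y_def sum_inv)
    ultimately have "(\<lambda>n. b - r) \<longlonglongrightarrow> (\<Sum>i\<in>UNIV. Yb$i)" by simp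
    thus ?thesis by (simp add: LIMSEQ_const_iff)
  qed
  have feasb: "A i *v zh i \<le> Yb$i" for i
    unfolding less_eq_vec_def
  proof
    fix s
    have l1: "(\<lambda>n. (A i *v (Zv (tt n) $ i)) $ s) \<longlonglongrightarrow> (A i *v zh i) $ s"
      unfolding zh_def
      by (intro tendsto_vec_nth bounded_linear.tendsto[OF matrix_vector_mul_bounded_linear] Zc)
    have l2: "(\<lambda>n. Y (tt n) $ i $ s + (Fv (tt n) - LP)) \<longlonglongrightarrow> Yb $ i $ s + 0"
      by (intro tendsto_add tendsto_vec_nth Yc gap0)
    have "(A i *v (Zv (tt n) $ i)) $ s \<le> Y (tt n) $ i $ s + (Fv (tt n) - LP)" for n
    proof -
      have "(A i *v z i (tt n)) $ s \<le> y i (tt n) $ s + v i (tt n)"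
        using feas(3)[of i "tt n"] by (simp add: less_eq_vec_def)
      thus ?thesis using v_le[of i "tt n"] by (simp add: Zv_def Y_def)
    qed
    hence "(A i *v zh i) $ s \<le> Yb $ i $ s + 0"
      by (intro tendsto_le[OF _ l2 l1]) auto
    thus "(A i *v zh i) $ s \<le> Yb $ i $ s" by simp
  qed
  have costb: "LPr_cost c zh = LP"
  proof (rule antisym)
    have l1: "(\<lambda>n. LPr_cost c (\<lambda>i. z i (tt n))) \<longlonglongrightarrow> LPr_cost c zh"
      unfolding LPr_cost_vec using Zc by (intro tendsto_inner tendsto_const) (simp add: Zv_def zh_def)
    have l2: "(\<lambda>n. Fv (tt n)) \<longlonglongrightarrow> LP" using gap0 by (simp add: LIM_zero_iff)
    show "LPr_cost c zh \<le> LP" by (rule tendsto_le[OF _ l2 l1]) (simp_all add: cost_le_F always_eventually)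
    have "(\<Sum>i\<in>UNIV. A i *v zh i) \<le> (\<Sum>i\<in>UNIV. Yb$i)" by (intro sum_mono feasb)
    hence "LPr_feasible c A X b r zh" using ZbK sumYb by (simp add: LPr_feasible_def Kp_def zh_def)
    thus "LP \<le> LPr_cost c zh" using zo by (simp add: LPr_optimal_def LP_def)
  qed
  have "good Yb zh" using sumYb feasb costb ZbK by (simp add: good_def Kp_def zh_def)
  thus ?thesis using ttn Yc by blast
qed

end

lemma pval_le:
  assumes K: "compact (convex hull Xi)" and z: "z \<in> convex hull Xi" and f: "Ai *v z \<le> y"
  shows "pval ci Ai Xi y \<le> ci \<bullet> z"
  unfolding pval_def
proof (rule cInf_lower)
  show "ci \<bullet> z \<in> (\<lambda>z. ci \<bullet> z) ` {z \<in> convex hull Xi. Ai *v z \<le> y}" using z f by blast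
  obtain B where B: "\<And>x. x \<in> convex hull Xi \<Longrightarrow> norm x \<le> B"
    using compact_imp_bounded[OF K] unfolding bounded_iff by blast
  have "- (norm ci * B) \<le> ci \<bullet> x" if "x \<in> convex hull Xi" for x
  proof -
    have "\<bar>ci \<bullet> x\<bar> \<le> norm ci * norm x" by (rule Cauchy_Schwarz_ineq2)
    also have "\<dots> \<le> norm ci * B" using B[OF that] by (intro mult_left_mono) auto
    finally show ?thesis by linarith
  qed
  thus "bdd_below ((\<lambda>z. ci \<bullet> z) ` {z \<in> convex hull Xi. Ai *v z \<le> y})"
    unfolding bdd_below_def by blast
qed

lemma pval_attain:
  fixes Ai :: "real^'n::finite^'s::finite"
  assumes K: "compact (convex hull Xi)" and yd: "y \<in> Ydom Ai Xi"
  shows "\<exists>z\<in>convex hull Xi. Ai *v z \<le> y \<and> pval ci Ai Xi y = ci \<bullet> z"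
proof -
  define S where "S = convex hull Xi \<inter> {z. Ai *v z \<in> {u. u \<le> y}}"
  have "closed {z. Ai *v z \<in> {u. u \<le> y}}"
    by (rule polyhedron_imp_closed[OF polyhedron_preimage[OF polyhedron_le_vec matrix_vector_mul_linear]])
  hence cS: "compact S" unfolding S_def by (rule compact_Int_closed[OF K])
  have nS: "S \<noteq> {}" using yd unfolding Ydom_def S_def by auto
  have "continuous_on S (\<lambda>w. ci \<bullet> w)" by (intro continuous_on_inner continuous_on_const continuous_on_id)
  from continuous_attains_inf[OF cS nS this]
  obtain x where x: "x \<in> S" "\<And>w. w \<in> S \<Longrightarrow> ci \<bullet> x \<le> ci \<bullet> w" by blast
  have "S = {z \<in> convex hull Xi. Ai *v z \<le> y}" by (auto simp: S_def)
  hence "pval ci Ai Xi y = ci \<bullet> x" unfolding pval_def using x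
    by (intro cInf_eq_minimum) auto
  thus ?thesis using x(1) by (auto simp: S_def)
qed

context alg begin

lemma Y_conv: "\<exists>Yb zh. good Yb zh \<and> Y \<longlonglongrightarrow> Yb"
proof -
  obtain Yb zh tt where gd: "good Yb zh" and ttn: "\<And>n. tt n \<ge> n" and Yc: "(\<lambda>n. Y (tt n)) \<longlonglongrightarrow> Yb"
    using good_limit by blast
  obtain wb where wb: "lap Nb wb = Yb - Y 0" using good_range[OF gd] by blast
  obtain C where C: "C > 0" "\<And>e::(real^'s)^'i. e \<bullet> lap Nb e \<le> C * (norm (lap Nb e))\<^sup>2"
    using lap_quad_upper[OF g] by blast
  have le: "lap Nb (W t - wb) = Y t - Yb" for t
    using Y_W[of t] wb by (simp add: linear_diff[OF linear_lap])
  have Qtt: "(\<lambda>n. Qf wb (tt n)) \<longlonglongrightarrow> 0"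
  proof (rule tendsto_sandwich[of "\<lambda>n. 0" _ _ "\<lambda>n. C * (norm (Y (tt n) - Yb))\<^sup>2"])
    show "\<forall>\<^sub>F n in sequentially. 0 \<le> Qf wb (tt n)" using Qf_nonneg by (simp add: always_eventually)
    have "Qf wb t \<le> C * (norm (Y t - Yb))\<^sup>2" for t
      using C(2)[of "W t - wb"] unfolding Qf_def le .
    thus "\<forall>\<^sub>F n in sequentially. Qf wb (tt n) \<le> C * (norm (Y (tt n) - Yb))\<^sup>2"
      by (simp add: always_eventually)
    show "(\<lambda>n. 0) \<longlonglongrightarrow> (0::real)" by simp
    have "(\<lambda>n. Y (tt n) - Yb) \<longlonglongrightarrow> 0" using Yc by (simp add: LIM_zero_iff)
    hence "(\<lambda>n. norm (Y (tt n) - Yb)) \<longlonglongrightarrow> 0" by (simp add: tendsto_norm_zero_iff)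
    hence "(\<lambda>n. C * (norm (Y (tt n) - Yb))\<^sup>2) \<longlonglongrightarrow> C * 0\<^sup>2" by (intro tendsto_intros)
    thus "(\<lambda>n. C * (norm (Y (tt n) - Yb))\<^sup>2) \<longlonglongrightarrow> 0" by simp
  qed
  have Ssum: "(\<lambda>m. S2 - (\<Sum>k<m. (\<alpha> k)\<^sup>2)) \<longlonglongrightarrow> 0"
  proof -
    have "(\<lambda>m. S2 - (\<Sum>k<m. (\<alpha> k)\<^sup>2)) \<longlonglongrightarrow> S2 - S2"
      unfolding S2_def by (intro tendsto_intros summable_LIMSEQ asq)
    thus ?thesis by simp
  qed
  have GG0: "GG \<ge> 0" by (simp add: GG_def)
  have Qconv: "Qf wb \<longlonglongrightarrow> 0"
  proof (rule LIMSEQ_I)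
    fix \<epsilon> :: real assume ep: "\<epsilon> > 0"
    obtain N2 where N2: "\<And>n. n \<ge> N2 \<Longrightarrow> norm (Qf wb (tt n) - 0) < \<epsilon>/2"
      using LIMSEQ_D[OF Qtt, of "\<epsilon>/2"] ep by auto
    obtain N1 where N1: "\<And>m. m \<ge> N1 \<Longrightarrow> norm (S2 - (\<Sum>k<m. (\<alpha> k)\<^sup>2) - 0) < \<epsilon>/(2*(GG+1))"
      using LIMSEQ_D[OF Ssum, of "\<epsilon>/(2*(GG+1))"] ep GG0 by auto
    define s where "s = tt (max N1 N2)"
    have s1: "s \<ge> N1" using ttn[of "max N1 N2"] by (simp add: s_def)
    have Qs: "Qf wb s < \<epsilon>/2" using N2[of "max N1 N2"] Qf_nonneg[of wb s] by (simp add: s_def)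
    have Ss: "S2 - (\<Sum>k<s. (\<alpha> k)\<^sup>2) < \<epsilon>/(2*(GG+1))" using N1[OF s1] by simp
    show "\<exists>no. \<forall>n\<ge>no. norm (Qf wb n - 0) < \<epsilon>"
    proof (intro exI allI impI)
      fix t assume st: "s \<le> t"
      have "(\<Sum>k<s. (\<alpha> k)\<^sup>2) + (\<Sum>k\<in>{s..<t}. (\<alpha> k)\<^sup>2) = (\<Sum>k<t. (\<alpha> k)\<^sup>2)"
        using sum.atLeastLessThan_concat[of 0 s t "\<lambda>k. (\<alpha> k)\<^sup>2"] st by (simp add: atLeast0LessThan)
      hence "(\<Sum>k\<in>{s..<t}. (\<alpha> k)\<^sup>2) \<le> S2 - (\<Sum>k<s. (\<alpha> k)\<^sup>2)" using partial_sq[of t] by simp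
      hence "GG * (\<Sum>k\<in>{s..<t}. (\<alpha> k)\<^sup>2) \<le> GG * (\<epsilon>/(2*(GG+1)))"
        using Ss GG0 by (intro mult_left_mono) auto
      also have "\<dots> \<le> \<epsilon>/2" using GG0 ep by (simp add: field_simps)
      finally have "Qf wb t < \<epsilon>" using Qmono[OF gd wb st] Qs by simp
      thus "norm (Qf wb t - 0) < \<epsilon>" using Qf_nonneg[of wb t] by simp
    qed
  qed
  have "(\<lambda>t. norm (Y t - Yb)) \<longlonglongrightarrow> 0"
  proof (rule tendsto_sandwich[of "\<lambda>n. 0" _ _ "\<lambda>t. sqrt (2 * NN * Qf wb t)"])
    show "\<forall>\<^sub>F n in sequentially. 0 \<le> norm (Y n - Yb)" by simp
    have "norm (Y t - Yb) \<le> sqrt (2 * NN * Qf wb t)" for t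
    proof (rule real_le_rsqrt)
      show "(norm (Y t - Yb))\<^sup>2 \<le> 2 * NN * Qf wb t"
        using lap_norm_upper[OF sym, of "W t - wb"] unfolding le Qf_def NN_def by simp
    qed
    thus "\<forall>\<^sub>F n in sequentially. norm (Y n - Yb) \<le> sqrt (2 * NN * Qf wb n)" by (simp add: always_eventually)
    show "(\<lambda>n. 0) \<longlonglongrightarrow> (0::real)" by simp
    have "(\<lambda>t. sqrt (2 * NN * Qf wb t)) \<longlonglongrightarrow> sqrt (2 * NN * 0)" by (intro tendsto_intros Qconv)
    thus "(\<lambda>t. sqrt (2 * NN * Qf wb t)) \<longlonglongrightarrow> 0" by simp
  qed
  hence "Y \<longlonglongrightarrow> Yb" by (simp add: tendsto_norm_zero_iff LIM_zero_iff)
  thus ?thesis using gd by blast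
qed

lemma F_conv:
  assumes gd: "good Yb zh" and Yc: "Y \<longlonglongrightarrow> Yb"
  shows "Fv \<longlonglongrightarrow> LP"
proof (rule tendsto_sandwich[of "\<lambda>t. LP" _ _ "\<lambda>t. LP + NN * M * norm (Y t - Yb)"])
  show "\<forall>\<^sub>F n in sequentially. LP \<le> Fv n" using F_ge by (simp add: always_eventually)
  have "Fv t \<le> LP + NN * M * norm (Y t - Yb)" for t
  proof -
    have "- (U t \<bullet> (Y t - Yb)) \<le> norm (U t) * norm (Y t - Yb)"
      using Cauchy_Schwarz_ineq2[of "U t" "Y t - Yb"] by linarith
    also have "\<dots> \<le> NN * M * norm (Y t - Yb)" using U_norm by (intro mult_right_mono) auto
    finally show ?thesis using F_upper[OF gd, of t] by simp
  qed
  thus "\<forall>\<^sub>F n in sequentially. Fv n \<le> LP + NN * M * norm (Y n - Yb)" by (simp add: always_eventually)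
  show "(\<lambda>t. LP) \<longlonglongrightarrow> LP" by simp
  have "(\<lambda>t. Y t - Yb) \<longlonglongrightarrow> 0" using Yc by (simp add: LIM_zero_iff)
  hence "(\<lambda>t. norm (Y t - Yb)) \<longlonglongrightarrow> 0" by (simp add: tendsto_norm_zero_iff)
  hence "(\<lambda>t. LP + NN * M * norm (Y t - Yb)) \<longlonglongrightarrow> LP + NN * M * 0" by (intro tendsto_intros)
  thus "(\<lambda>t. LP + NN * M * norm (Y t - Yb)) \<longlonglongrightarrow> LP" by simp
qed

lemma LPvalue: "LPr_value c A X b r = LP"
  unfolding LPr_value_def LP_def using zo
  by (intro cInf_eq_minimum) (auto simp: LPr_optimal_def)

lemma sumAz: "(\<Sum>i\<in>UNIV. A i *v z i t) \<le> b - r + vec (Vs t)"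
proof -
  have "(\<Sum>i\<in>UNIV. A i *v z i t) \<le> (\<Sum>i\<in>UNIV. y i t + vec (v i t))"
    by (rule sum_mono) (rule feas(3))
  also have "\<dots> = b - r + vec (Vs t)"
    by (simp add: sum.distrib sum_inv Vs_def vec_eq_iff)
  finally show ?thesis .
qed

theorem results:
  "(\<forall>t. (\<Sum>i\<in>UNIV. y i t) = b - r) \<and>
   (\<exists>ystar. MP_optimal c A X b r ystar \<and> (\<forall>i. (\<lambda>t. norm (y i t - ystar i)) \<longlonglongrightarrow> 0)) \<and>
   (\<forall>zinf \<sigma>. strict_mono \<sigma> \<and> (\<forall>i. (\<lambda>t. z i (\<sigma> t)) \<longlonglongrightarrow> zinf i) \<longrightarrow>
         LPr_optimal c A X b r zinf \<and> LPr_cost c zinf = LPr_value c A X b r)"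
proof (intro conjI allI impI)
  show "(\<Sum>i\<in>UNIV. y i t) = b - r" for t by (rule sum_inv)
  obtain Yb zh where gd: "good Yb zh" and Yc: "Y \<longlonglongrightarrow> Yb" using Y_conv by blast
  have Fc: "Fv \<longlonglongrightarrow> LP" by (rule F_conv[OF gd Yc])
  show "\<exists>ystar. MP_optimal c A X b r ystar \<and> (\<forall>i. (\<lambda>t. norm (y i t - ystar i)) \<longlonglongrightarrow> 0)"
  proof (intro exI conjI allI)
    show "(\<lambda>t. norm (y i t - Yb$i)) \<longlonglongrightarrow> 0" for i
    proof (rule tendsto_sandwich[of "\<lambda>t. 0" _ _ "\<lambda>t. norm (Y t - Yb)"])
      show "\<forall>\<^sub>F n in sequentially. 0 \<le> norm (y i n - Yb $ i)" by simp
      have "norm (y i t - Yb$i) \<le> norm (Y t - Yb)" for t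
        using Finite_Cartesian_Product.norm_nth_le[of "Y t - Yb" i] by (simp add: Y_def)
      thus "\<forall>\<^sub>F n in sequentially. norm (y i n - Yb $ i) \<le> norm (Y n - Yb)" by (simp add: always_eventually)
      show "(\<lambda>t. 0) \<longlonglongrightarrow> (0::real)" by simp
      have "(\<lambda>t. Y t - Yb) \<longlonglongrightarrow> 0" using Yc by (simp add: LIM_zero_iff)
      thus "(\<lambda>t. norm (Y t - Yb)) \<longlonglongrightarrow> 0" by (simp add: tendsto_norm_zero_iff)
    qed
    have gd': "(\<Sum>i\<in>UNIV. Yb$i) = b - r" "\<And>i. zh i \<in> K i" "\<And>i. A i *v zh i \<le> Yb$i" "LPr_cost c zh = LP"
      using gd by (auto simp: good_def)
    have feasY: "MP_feasible A X b r (\<lambda>i. Yb$i)"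
      using gd' by (auto simp: MP_feasible_def Ydom_def)
    have up: "(\<Sum>i\<in>UNIV. pval (c i) (A i) (X i) (Yb$i)) \<le> LP"
    proof -
      have "(\<Sum>i\<in>UNIV. pval (c i) (A i) (X i) (Yb$i)) \<le> (\<Sum>i\<in>UNIV. c i \<bullet> zh i)"
        by (intro sum_mono pval_le[OF Kcomp] gd')
      thus ?thesis using gd'(4) by (simp add: LPr_cost_def)
    qed
    have low: "LP \<le> (\<Sum>i\<in>UNIV. pval (c i) (A i) (X i) (y' i))" if y': "MP_feasible A X b r y'" for y'
    proof -
      have "\<forall>i. \<exists>w. w \<in> K i \<and> A i *v w \<le> y' i \<and> pval (c i) (A i) (X i) (y' i) = c i \<bullet> w"
      proof
        fix i
        have "y' i \<in> Ydom (A i) (X i)" using y' by (simp add: MP_feasible_def)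
        from pval_attain[OF Kcomp this] show "\<exists>w. w \<in> K i \<and> A i *v w \<le> y' i \<and> pval (c i) (A i) (X i) (y' i) = c i \<bullet> w"
          by blast
      qed
      from choice[OF this] obtain w where w: "\<And>i. w i \<in> K i" "\<And>i. A i *v w i \<le> y' i"
        "\<And>i. pval (c i) (A i) (X i) (y' i) = c i \<bullet> w i" by blast
      have "(\<Sum>i\<in>UNIV. A i *v w i) \<le> (\<Sum>i\<in>UNIV. y' i)" by (intro sum_mono w(2))
      hence "LPr_feasible c A X b r w" using y' w(1) by (simp add: LPr_feasible_def MP_feasible_def)
      hence "LP \<le> LPr_cost c w" using zo by (simp add: LPr_optimal_def LP_def)
      thus ?thesis by (simp add: LPr_cost_def w(3))
    qed
    show "MP_optimal c A X b r (\<lambda>i. Yb$i)"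
      unfolding MP_optimal_def using feasY up low by (meson order_trans)
  qed
  fix zinf \<sigma> assume H: "strict_mono \<sigma> \<and> (\<forall>i. (\<lambda>t. z i (\<sigma> t)) \<longlonglongrightarrow> zinf i)"
  hence sm: "strict_mono \<sigma>" and zc: "\<And>i. (\<lambda>t. z i (\<sigma> t)) \<longlonglongrightarrow> zinf i" by auto
  have Fs: "(\<lambda>t. Fv (\<sigma> t)) \<longlonglongrightarrow> LP" using LIMSEQ_subseq_LIMSEQ[OF Fc sm] by (simp add: o_def)
  have gs: "(\<lambda>t. Fv (\<sigma> t) - LP) \<longlonglongrightarrow> 0" using Fs by (simp add: LIM_zero_iff)
  have zK: "zinf i \<in> K i" for i
    by (rule closed_sequentially[OF compact_imp_closed[OF Kcomp] _ zc]) (simp add: feas(1))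
  have fz: "(\<Sum>i\<in>UNIV. A i *v zinf i) \<le> b - r"
    unfolding less_eq_vec_def
  proof
    fix s
    have l1: "(\<lambda>t. (\<Sum>i\<in>UNIV. A i *v z i (\<sigma> t)) $ s) \<longlonglongrightarrow> (\<Sum>i\<in>UNIV. A i *v zinf i) $ s"
      by (intro tendsto_vec_nth tendsto_sum bounded_linear.tendsto[OF matrix_vector_mul_bounded_linear] zc)
    have l2: "(\<lambda>t. (b - r) $ s + (Fv (\<sigma> t) - LP)) \<longlonglongrightarrow> (b - r) $ s + 0"
      by (intro tendsto_intros gs)
    have "(\<Sum>i\<in>UNIV. A i *v z i (\<sigma> t)) $ s \<le> (b - r) $ s + (Fv (\<sigma> t) - LP)" for t
    proof -
      have "(\<Sum>i\<in>UNIV. A i *v z i (\<sigma> t)) $ s \<le> (b - r) $ s + Vs (\<sigma> t)"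
        using sumAz[of "\<sigma> t"] by (simp add: less_eq_vec_def)
      moreover have "Vs (\<sigma> t) \<le> Fv (\<sigma> t) - LP" using F_lower[of "\<sigma> t"] by simp
      ultimately show ?thesis by simp
    qed
    hence "(\<Sum>i\<in>UNIV. A i *v zinf i) $ s \<le> (b - r) $ s + 0"
      by (intro tendsto_le[OF _ l2 l1]) (simp_all add: always_eventually)
    thus "(\<Sum>i\<in>UNIV. A i *v zinf i) $ s \<le> (b - r) $ s" by simp
  qed
  have feasz: "LPr_feasible c A X b r zinf" using fz zK by (simp add: LPr_feasible_def)
  have cz: "LPr_cost c zinf \<le> LP"
  proof -
    have l1: "(\<lambda>t. LPr_cost c (\<lambda>i. z i (\<sigma> t))) \<longlonglongrightarrow> LPr_cost c zinf"
      unfolding LPr_cost_def by (intro tendsto_sum tendsto_inner tendsto_const zc)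
    show ?thesis by (rule tendsto_le[OF _ Fs l1]) (simp_all add: cost_le_F always_eventually)
  qed
  have cz2: "LP \<le> LPr_cost c zinf" using zo feasz by (simp add: LPr_optimal_def LP_def)
  show "LPr_optimal c A X b r zinf"
    unfolding LPr_optimal_def using feasz cz zo
    by (auto simp: LPr_optimal_def LP_def intro: order_trans)
  show "LPr_cost c zinf = LPr_value c A X b r" using cz cz2 LPvalue by simp
qed

end

theorem proposition1:
  fixes c :: "'i::finite \<Rightarrow> real^'n::finite"
    and A :: "'i \<Rightarrow> real^'n^'s::finite"
    and D :: "'i \<Rightarrow> real^'n^'m::finite"
    and d :: "'i \<Rightarrow> real^'m"
    and Zc :: "'i \<Rightarrow> 'n set"
    and b r :: "real^'s"
    and Nb :: "'i \<Rightarrow> 'i set"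
    and \<alpha> :: "nat \<Rightarrow> real"
    and y0 :: "'i \<Rightarrow> real^'s"
  assumes X_nonempty: "\<And>i. mip_set (Zc i) (D i) (d i) \<noteq> {}"
    and X_compact: "\<And>i. compact (mip_set (Zc i) (D i) (d i))"
    and r_nonneg: "r \<ge> 0"
    and assmA: "\<exists>!z. LPr_optimal c A (\<lambda>i. mip_set (Zc i) (D i) (d i)) b r z"
    and assmB: "\<And>t. \<alpha> t \<ge> 0" "\<not> summable \<alpha>" "summable (\<lambda>t. (\<alpha> t)\<^sup>2)"
    and graph: "connected_undirected Nb"
    and init: "(\<Sum>i\<in>UNIV. y0 i) = b - r"
  shows "\<exists>M>0. \<forall>(y :: 'i \<Rightarrow> nat \<Rightarrow> real^'s) (z :: 'i \<Rightarrow> nat \<Rightarrow> real^'n)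
            (v :: 'i \<Rightarrow> nat \<Rightarrow> real) (\<mu> :: 'i \<Rightarrow> nat \<Rightarrow> real^'s).
      (\<forall>i. y i 0 = y0 i) \<and>
      (\<forall>i t. P1_primal_dual_opt (c i) (A i) (mip_set (Zc i) (D i) (d i)) M (y i t)
               (z i t) (v i t) (\<mu> i t)) \<and>
      (\<forall>i t. y i (Suc t) = y i t + \<alpha> t *\<^sub>R (\<Sum>j\<in>Nb i. \<mu> i t - \<mu> j t))
      \<longrightarrow>
      (\<forall>t. (\<Sum>i\<in>UNIV. y i t) = b - r) \<and>
      (\<exists>ystar. MP_optimal c A (\<lambda>i. mip_set (Zc i) (D i) (d i)) b r ystar \<and>
         (\<forall>i. (\<lambda>t. norm (y i t - ystar i)) \<longlonglongrightarrow> 0)) \<and>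
      (\<forall>zinf \<sigma>. strict_mono \<sigma> \<and> (\<forall>i. (\<lambda>t. z i (\<sigma> t)) \<longlonglongrightarrow> zinf i) \<longrightarrow>
         LPr_optimal c A (\<lambda>i. mip_set (Zc i) (D i) (d i)) b r zinf \<and>
         LPr_cost c zinf = LPr_value c A (\<lambda>i. mip_set (Zc i) (D i) (d i)) b r)"
proof -
  let ?X = "\<lambda>i. mip_set (Zc i) (D i) (d i)"
  obtain zo where zo: "LPr_optimal c A ?X b r zo" using assmA by blast
  have polyt: "\<And>i. polytope (convex hull ?X i)" by (rule polytope_mip[OF X_compact])
  obtain \<Lambda> where L: "\<Lambda> \<ge> 0" and EP: "\<forall>z V. (\<forall>i. z i \<in> convex hull ?X i) \<longrightarrow> V \<ge> 0 \<longrightarrow>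
           (\<Sum>i\<in>UNIV. A i *v z i) \<le> b - r + vec V \<longrightarrow> LPr_cost c zo - \<Lambda> * V \<le> LPr_cost c z"
    using exact_penalty[OF polyt zo] by blast
  have Kc: "\<And>i. compact (convex hull ?X i)" by (rule compact_convex_hull[OF X_compact])
  show ?thesis
  proof (intro exI[of _ "\<Lambda> + 1"] conjI)
    show "\<Lambda> + 1 > 0" using L by simp
  next
    show "\<forall>(y :: 'i \<Rightarrow> nat \<Rightarrow> real^'s) (z :: 'i \<Rightarrow> nat \<Rightarrow> real^'n)
            (v :: 'i \<Rightarrow> nat \<Rightarrow> real) (\<mu> :: 'i \<Rightarrow> nat \<Rightarrow> real^'s).
      (\<forall>i. y i 0 = y0 i) \<and>
      (\<forall>i t. P1_primal_dual_opt (c i) (A i) (mip_set (Zc i) (D i) (d i)) (\<Lambda> + 1) (y i t)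
               (z i t) (v i t) (\<mu> i t)) \<and>
      (\<forall>i t. y i (Suc t) = y i t + \<alpha> t *\<^sub>R (\<Sum>j\<in>Nb i. \<mu> i t - \<mu> j t))
      \<longrightarrow>
      (\<forall>t. (\<Sum>i\<in>UNIV. y i t) = b - r) \<and>
      (\<exists>ystar. MP_optimal c A (\<lambda>i. mip_set (Zc i) (D i) (d i)) b r ystar \<and>
         (\<forall>i. (\<lambda>t. norm (y i t - ystar i)) \<longlonglongrightarrow> 0)) \<and>
      (\<forall>zinf \<sigma>. strict_mono \<sigma> \<and> (\<forall>i. (\<lambda>t. z i (\<sigma> t)) \<longlonglongrightarrow> zinf i) \<longrightarrow>
         LPr_optimal c A (\<lambda>i. mip_set (Zc i) (D i) (d i)) b r zinf \<and>
         LPr_cost c zinf = LPr_value c A (\<lambda>i. mip_set (Zc i) (D i) (d i)) b r)"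
    proof (intro allI impI)
    fix y :: "'i \<Rightarrow> nat \<Rightarrow> real^'s" and z :: "'i \<Rightarrow> nat \<Rightarrow> real^'n"
      and v :: "'i \<Rightarrow> nat \<Rightarrow> real" and \<mu> :: "'i \<Rightarrow> nat \<Rightarrow> real^'s"
    assume H: "(\<forall>i. y i 0 = y0 i) \<and>
      (\<forall>i t. P1_primal_dual_opt (c i) (A i) (mip_set (Zc i) (D i) (d i)) (\<Lambda> + 1) (y i t)
               (z i t) (v i t) (\<mu> i t)) \<and>
      (\<forall>i t. y i (Suc t) = y i t + \<alpha> t *\<^sub>R (\<Sum>j\<in>Nb i. \<mu> i t - \<mu> j t))"
    interpret alg c A ?X b r Nb \<alpha> "\<Lambda> + 1" \<Lambda> zo y z v \<mu>
    proof
      show "\<And>i. compact (convex hull ?X i)" by (rule Kc)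
      show "connected_undirected Nb" by (rule graph)
      show "\<And>t. 0 \<le> \<alpha> t" by (rule assmB(1))
      show "\<not> summable \<alpha>" by (rule assmB(2))
      show "summable (\<lambda>t. (\<alpha> t)\<^sup>2)" by (rule assmB(3))
      show "\<And>i t. P1_primal_dual_opt (c i) (A i) (?X i) (\<Lambda> + 1) (y i t) (z i t) (v i t) (\<mu> i t)"
        using H by blast
      show "\<And>i t. y i (Suc t) = y i t + \<alpha> t *\<^sub>R (\<Sum>j\<in>Nb i. \<mu> i t - \<mu> j t)" using H by blast
      show "(\<Sum>i\<in>UNIV. y i 0) = b - r" using H init by simp
      show "LPr_optimal c A ?X b r zo" by (rule zo)
      show "\<And>z V. \<forall>i. z i \<in> convex hull ?X i \<Longrightarrow> 0 \<le> V \<Longrightarrow>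
           (\<Sum>i\<in>UNIV. A i *v z i) \<le> b - r + vec V \<Longrightarrow> LPr_cost c zo - \<Lambda> * V \<le> LPr_cost c z"
        using EP by blast
      show "0 \<le> \<Lambda>" by (rule L)
      show "\<Lambda> + 1 = \<Lambda> + 1" ..
    qed
    show "(\<forall>t. (\<Sum>i\<in>UNIV. y i t) = b - r) \<and>
      (\<exists>ystar. MP_optimal c A (\<lambda>i. mip_set (Zc i) (D i) (d i)) b r ystar \<and>
         (\<forall>i. (\<lambda>t. norm (y i t - ystar i)) \<longlonglongrightarrow> 0)) \<and>
      (\<forall>zinf \<sigma>. strict_mono \<sigma> \<and> (\<forall>i. (\<lambda>t. z i (\<sigma> t)) \<longlonglongrightarrow> zinf i) \<longrightarrow>
         LPr_optimal c A (\<lambda>i. mip_set (Zc i) (D i) (d i)) b r zinf \<and>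
         LPr_cost c zinf = LPr_value c A (\<lambda>i. mip_set (Zc i) (D i) (d i)) b r)"
      by (rule results)
    qed
  qed
qed


end
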